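(* For all integers $n, p \geq 4$, the language $$L_{n,p} = \{ w \in \{0,1\}^{*} \ | \ |w|_{0} \equiv 0 \ (\mathrm{mod}\ n), \ |w|_{1} \equiv 0 \ (\mathrm{mod}\ p) \}$$ is toric, i.e. $g(L_{n,p}) = 1$.
   Context: $|w|_a$ denotes the number of occurrences of the letter $a$ in the word $w$. A DFA over a finite alphabet $\Sigma$ is $(Q,q_0,F,\delta)$ with $Q$ finite and total transition function $\delta:Q\times\Sigma\to Q$. Its underlying undirected multigraph has vertex set $Q$ and one edge joining $q$ and $\delta(q,a)$ for every $(q,a)$ (self-loops and parallel edges kept). The genus of a finite multigraph is the least genus of a closed orientable surface into which it embeds; $g(A)$ is the genus of the underlying multigraph of $A$; $g(L)=\min\{g(A): A\text{ a DFA recognizing }L\}$. *)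

theory Defs
  imports Main
begin

text \<open>A DFA over alphabet Alph: states are a finite set Q of naturals (any finite state
set can be renamed into nat), start state q0, final states F, transition function
delta, total on Q x Alph.\<close>

definition is_dfa :: "'a set \<Rightarrow> nat set \<Rightarrow> nat \<Rightarrow> nat set \<Rightarrow> (nat \<Rightarrow> 'a \<Rightarrow> nat) \<Rightarrow> bool" where
  "is_dfa Alph Q q0 F delta \<longleftrightarrow> finite Alph \<and> finite Q \<and> q0 \<in> Q \<and> F \<subseteq> Q \<and>
     (\<forall>q\<in>Q. \<forall>a\<in>Alph. delta q a \<in> Q)"

definition dfa_lang :: "'a set \<Rightarrow> nat \<Rightarrow> nat set \<Rightarrow> (nat \<Rightarrow> 'a \<Rightarrow> nat) \<Rightarrow> 'a list set" where
  "dfa_lang Alph q0 F delta = {w \<in> lists Alph. foldl delta q0 w \<in> F}"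

text \<open>Underlying multigraph, as a set of darts (half-edges). The edge for (q,a) has
the dart (q,a,True) at q and the dart (q,a,False) at delta q a.\<close>

definition darts :: "'a set \<Rightarrow> nat set \<Rightarrow> (nat \<times> 'a \<times> bool) set" where
  "darts Alph Q = Q \<times> Alph \<times> UNIV"

fun dart_vertex :: "(nat \<Rightarrow> 'a \<Rightarrow> nat) \<Rightarrow> nat \<times> 'a \<times> bool \<Rightarrow> nat" where
  "dart_vertex delta (q, a, b) = (if b then q else delta q a)"

fun dart_rev :: "nat \<times> 'a \<times> bool \<Rightarrow> nat \<times> 'a \<times> bool" where
  "dart_rev (q, a, b) = (q, a, \<not> b)"

definition rotation_system :: "'a set \<Rightarrow> nat set \<Rightarrow> (nat \<Rightarrow> 'a \<Rightarrow> nat)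
    \<Rightarrow> (nat \<times> 'a \<times> bool \<Rightarrow> nat \<times> 'a \<times> bool) \<Rightarrow> bool" where
  "rotation_system Alph Q delta sigma \<longleftrightarrow>
     bij_betw sigma (darts Alph Q) (darts Alph Q) \<and>
     (\<forall>d\<in>darts Alph Q. dart_vertex delta (sigma d) = dart_vertex delta d) \<and>
     (\<forall>d\<in>darts Alph Q. \<forall>e\<in>darts Alph Q.
        dart_vertex delta d = dart_vertex delta e \<longrightarrow> (\<exists>n. (sigma ^^ n) d = e))"

text \<open>Faces of the cellular embedding determined by sigma: orbits of sigma o dart_rev,
plus one face for every isolated vertex.\<close>

definition num_faces :: "'a set \<Rightarrow> nat set \<Rightarrow> (nat \<Rightarrow> 'a \<Rightarrow> nat)
    \<Rightarrow> (nat \<times> 'a \<times> bool \<Rightarrow> nat \<times> 'a \<times> bool) \<Rightarrow> nat" where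
  "num_faces Alph Q delta sigma =
     card {{((sigma \<circ> dart_rev) ^^ n) d | n. True} | d. d \<in> darts Alph Q}
     + card {q \<in> Q. \<forall>d\<in>darts Alph Q. dart_vertex delta d \<noteq> q}"

definition graph_edges :: "'a set \<Rightarrow> nat set \<Rightarrow> (nat \<Rightarrow> 'a \<Rightarrow> nat) \<Rightarrow> nat rel" where
  "graph_edges Alph Q delta = {(q, delta q a) | q a. q \<in> Q \<and> a \<in> Alph}"

definition num_components :: "'a set \<Rightarrow> nat set \<Rightarrow> (nat \<Rightarrow> 'a \<Rightarrow> nat) \<Rightarrow> nat" where
  "num_components Alph Q delta =
     card (Q // ((graph_edges Alph Q delta \<union> (graph_edges Alph Q delta)\<inverse>)\<^sup>*))"

text \<open>Genus of the underlying multigraph (Heffter-Edmonds / Battle-Harary-Kodama-Youngs):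
the least g such that some rotation system gives V - E + F = 2c - 2g.\<close>

definition dfa_genus :: "'a set \<Rightarrow> nat set \<Rightarrow> (nat \<Rightarrow> 'a \<Rightarrow> nat) \<Rightarrow> nat" where
  "dfa_genus Alph Q delta = (LEAST g. \<exists>sigma. rotation_system Alph Q delta sigma \<and>
     int (card Q) - int (card Q * card Alph) + int (num_faces Alph Q delta sigma)
       = 2 * int (num_components Alph Q delta) - 2 * int g)"

definition lang_genus :: "'a set \<Rightarrow> 'a list set \<Rightarrow> nat" where
  "lang_genus Alph L = (LEAST g. \<exists>Q q0 F delta. is_dfa Alph Q q0 F delta \<and>
     dfa_lang Alph q0 F delta = L \<and> dfa_genus Alph Q delta = g)"

definition L_np :: "nat \<Rightarrow> nat \<Rightarrow> nat list set" where
  "L_np n p = {w \<in> lists {0, 1}. count_list w 0 mod n = 0 \<and> count_list w 1 mod p = 0}"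

end

theory Submission
  imports Defs "HOL-Combinatorics.Cycles"
begin

definition orb :: "('d \<Rightarrow> 'd) \<Rightarrow> 'd \<Rightarrow> 'd set" where
  "orb f x = {(f ^^ n) x | n. True}"

lemma self_in_orb[simp]: "x \<in> orb f x"
  unfolding orb_def by (metis (mono_tags, lifting) funpow_0 mem_Collect_eq)

lemma funpow_in_orb[simp]: "(f ^^ n) x \<in> orb f x"
  unfolding orb_def by blast

lemma orb_nonempty[simp]: "orb f x \<noteq> {}"
  using self_in_orb[of x f] by blast

lemma funpow_mult_period:
  assumes "(f ^^ k) x = x" shows "(f ^^ (k * q)) x = x"
proof (induction q)
  case 0 then show ?case by simp
next
  case (Suc q)
  have "(f ^^ (k * Suc q)) x = (f ^^ k) ((f ^^ (k * q)) x)"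
    by (simp add: funpow_add add.commute)
  then show ?case using Suc assms by simp
qed

lemma funpow_mod_period:
  assumes "(f ^^ k) x = x" shows "(f ^^ n) x = (f ^^ (n mod k)) x"
proof -
  have "n = n mod k + k * (n div k)" by simp
  then have "(f ^^ n) x = (f ^^ (n mod k)) ((f ^^ (k * (n div k))) x)"
    by (metis funpow_add o_apply)
  then show ?thesis using funpow_mult_period[OF assms] by simp
qed

lemma orb_period:
  assumes "(f ^^ k) x = x" "k > 0"
  shows "orb f x = {(f ^^ i) x | i. i < k}"
proof -
  have "(f ^^ n) x \<in> {(f ^^ i) x | i. i < k}" for n
    using funpow_mod_period[OF assms(1), of n] assms(2) by (metis (mono_tags, lifting) mem_Collect_eq mod_less_divisor)
  then show ?thesis unfolding orb_def by blast
qed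

lemma orb_perm:
  assumes "permutation f"
  shows "orb f x = {(f ^^ i) x | i. i < least_power f x}"
  by (rule orb_period) (use least_power_of_permutation[OF assms] in auto)

lemma finite_orb:
  assumes "permutation f" shows "finite (orb f x)"
  using orb_perm[OF assms] by simp

lemma orb_trans:
  assumes "y \<in> orb f x" shows "orb f y \<subseteq> orb f x"
proof
  fix z assume "z \<in> orb f y"
  then obtain m where z: "z = (f ^^ m) y" unfolding orb_def by blast
  obtain n where y: "y = (f ^^ n) x" using assms unfolding orb_def by blast
  have "z = (f ^^ (m + n)) x" using z y by (simp add: funpow_add)
  then show "z \<in> orb f x" by simp
qed

lemma orb_sym:
  assumes "permutation f" "y \<in> orb f x" shows "x \<in> orb f y"
proof -
  obtain n where y: "y = (f ^^ n) x" using assms unfolding orb_def by blast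
  define k where "k = least_power f x"
  have k: "(f ^^ k) x = x" "k > 0" using least_power_of_permutation[OF assms(1)] k_def by auto
  have "(f ^^ (k * n)) x = x" using funpow_mult_period[OF k(1)] .
  moreover have "k * n = (k * n - n) + n" using k(2) by simp
  ultimately have "(f ^^ (k * n - n)) y = x" using y by (metis funpow_add comp_apply)
  then show ?thesis using funpow_in_orb[of "k * n - n" f y] by simp
qed

lemma orb_eq:
  assumes "permutation f" "y \<in> orb f x" shows "orb f y = orb f x"
  using orb_trans[OF assms(2)] orb_trans[OF orb_sym[OF assms]] by (rule subset_antisym)

lemma orb_disj:
  assumes "permutation f" "z \<in> orb f x" "z \<in> orb f y" shows "orb f x = orb f y"
  using orb_eq[OF assms(1,2)] orb_eq[OF assms(1,3)] by simp

lemma funpow_distinct: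
  assumes "permutation f" "i < j" "j < least_power f x"
  shows "(f ^^ i) x \<noteq> (f ^^ j) x"
proof
  assume eq: "(f ^^ i) x = (f ^^ j) x"
  have "(f ^^ j) x = (f ^^ i) ((f ^^ (j - i)) x)"
    using assms(2) by (metis funpow_add le_add_diff_inverse less_imp_le o_apply)
  moreover have "inj (f ^^ i)"
    using assms(1) permutation_bijective bij_is_inj inj_fn by blast
  ultimately have "(f ^^ (j - i)) x = x" using eq by (metis injD)
  then have "least_power f x \<le> j - i" using least_power_le[of "j - i" f x] assms(2) by simp
  then show False using assms by simp
qed

lemma orb_closed:
  assumes "f ` X \<subseteq> X" "x \<in> X" shows "orb f x \<subseteq> X"
proof -
  have "(f ^^ n) x \<in> X" for n by (induction n) (use assms in auto)
  then show ?thesis unfolding orb_def by blast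
qed


lemma orb_same_funpow:
  assumes "\<And>n. (g ^^ n) w = (f ^^ n) w" shows "orb g w = orb f w"
  unfolding orb_def using assms by simp

lemma transp_same:
  assumes perm: "permutation f" and uv: "u \<noteq> v" "v \<in> orb f u"
  defines "g \<equiv> f \<circ> transpose u v"
  shows "orb g u \<union> orb g v = orb f u" "orb g u \<inter> orb g v = {}"
    "\<And>w. w \<notin> orb f u \<Longrightarrow> orb g w = orb f w"
proof -
  define k where "k = least_power f u"
  have k: "(f^^k) u = u" "k > 0" using least_power_of_permutation[OF perm] k_def by auto
  have orbfu: "orb f u = {(f^^j) u | j. j < k}" using orb_perm[OF perm] k_def by simp
  obtain m where m: "v = (f^^m) u" "m < k" using uv(2) orbfu by blast
  have dist: "i = j" if "i < k" "j < k" "(f^^i) u = (f^^j) u" for i j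
  proof (rule ccontr)
    assume "i \<noteq> j"
    then consider "i < j" | "j < i" by linarith
    then show False
      using funpow_distinct[OF perm, of i j u] funpow_distinct[OF perm, of j i u] that k_def by auto
  qed
  have m0: "m > 0" using m uv(1) by (metis funpow_0 gr0I)
  have gu: "(g^^i) u = (f^^(m+i)) u" if "1 \<le> i" "i \<le> k - m" for i
    using that
  proof (induction i)
    case 0 then show ?case by simp
  next
    case (Suc i)
    show ?case
    proof (cases "i = 0")
      case True
      then show ?thesis using m(1) by (simp add: g_def)
    next
      case False
      then have IH: "(g^^i) u = (f^^(m+i)) u" using Suc by simp
      have lt: "m + i < k" using Suc.prems by simp
      have ne1: "(f^^(m+i)) u \<noteq> u"
        using dist[OF lt k(2)] False by (metis add_is_0 funpow_0)
      have ne2: "(f^^(m+i)) u \<noteq> v"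
        using dist[OF lt m(2)] False m(1) by auto
      have "(g^^Suc i) u = g ((f^^(m+i)) u)" using IH by simp
      also have "\<dots> = f ((f^^(m+i)) u)" using ne1 ne2 by (simp add: g_def)
      also have "\<dots> = (f^^(m + Suc i)) u" by simp
      finally show ?thesis .
    qed
  qed
  have gv: "(g^^i) v = (f^^i) u" if "1 \<le> i" "i \<le> m" for i
    using that
  proof (induction i)
    case 0 then show ?case by simp
  next
    case (Suc i)
    show ?case
    proof (cases "i = 0")
      case True
      then show ?thesis using uv(1) by (simp add: g_def)
    next
      case False
      then have IH: "(g^^i) v = (f^^i) u" using Suc by simp
      have lt: "i < k" using Suc.prems m by simp
      have ne1: "(f^^i) u \<noteq> u"
        using dist[OF lt k(2)] False by (metis funpow_0)
      have ne2: "(f^^i) u \<noteq> v"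
        using dist[OF lt m(2)] Suc.prems m(1) by auto
      have "(g^^Suc i) v = g ((f^^i) u)" using IH by simp
      also have "\<dots> = f ((f^^i) u)" using ne1 ne2 by (simp add: g_def)
      also have "\<dots> = (f^^(Suc i)) u" by simp
      finally show ?thesis .
    qed
  qed
  have pu: "(g^^(k-m)) u = u" using gu[of "k-m"] m k by simp
  have pv: "(g^^m) v = v" using gv[of m] m0 m by simp
  have orbgu: "orb g u = {(f^^j) u | j. j = 0 \<or> (m < j \<and> j < k)}"
  proof -
    have "orb g u = {(g^^i) u | i. i < k - m}" using orb_period[OF pu] m by simp
    also have "\<dots> = {(f^^j) u | j. j = 0 \<or> (m < j \<and> j < k)}"
    proof (intro set_eqI iffI)
      fix x assume "x \<in> {(g^^i) u | i. i < k - m}"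
      then obtain i where i: "x = (g^^i) u" "i < k - m" by blast
      show "x \<in> {(f^^j) u | j. j = 0 \<or> (m < j \<and> j < k)}"
      proof (cases "i = 0")
        case True then show ?thesis using i by (intro CollectI exI[of _ 0]) simp
      next
        case False
        then show ?thesis using i gu[of i] by (intro CollectI exI[of _ "m+i"]) simp
      qed
    next
      fix x assume "x \<in> {(f^^j) u | j. j = 0 \<or> (m < j \<and> j < k)}"
      then obtain j where j: "x = (f^^j) u" "j = 0 \<or> (m < j \<and> j < k)" by blast
      show "x \<in> {(g^^i) u | i. i < k - m}"
      proof (cases "j = 0")
        case True then show ?thesis using j m by (intro CollectI exI[of _ 0]) simp
      next
        case False
        then have jm: "m < j" "j < k" using j by auto
        then have "(g^^(j-m)) u = (f^^j) u" using gu[of "j - m"] by simp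
        then show ?thesis using j jm by (intro CollectI exI[of _ "j - m"]) simp
      qed
    qed
    finally show ?thesis .
  qed
  have orbgv: "orb g v = {(f^^j) u | j. 0 < j \<and> j \<le> m}"
  proof -
    have "orb g v = {(g^^i) v | i. i < m}" using orb_period[OF pv] m0 by simp
    also have "\<dots> = {(f^^j) u | j. 0 < j \<and> j \<le> m}"
    proof (intro set_eqI iffI)
      fix x assume "x \<in> {(g^^i) v | i. i < m}"
      then obtain i where i: "x = (g^^i) v" "i < m" by blast
      show "x \<in> {(f^^j) u | j. 0 < j \<and> j \<le> m}"
      proof (cases "i = 0")
        case True then show ?thesis using i m m0 by (intro CollectI exI[of _ m]) simp
      next
        case False
        then show ?thesis using i gv[of i] by (intro CollectI exI[of _ i]) simp
      qed
    next
      fix x assume "x \<in> {(f^^j) u | j. 0 < j \<and> j \<le> m}"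
      then obtain j where j: "x = (f^^j) u" "0 < j" "j \<le> m" by blast
      show "x \<in> {(g^^i) v | i. i < m}"
      proof (cases "j = m")
        case True then show ?thesis using j m m0 by (intro CollectI exI[of _ 0]) simp
      next
        case False
        then show ?thesis using j gv[of j] by (intro CollectI exI[of _ j]) simp
      qed
    qed
    finally show ?thesis .
  qed
  show "orb g u \<union> orb g v = orb f u"
  proof (intro set_eqI iffI)
    fix x assume "x \<in> orb g u \<union> orb g v"
    then show "x \<in> orb f u" unfolding orbgu orbgv orbfu using m by auto
  next
    fix x assume "x \<in> orb f u"
    then obtain j where j: "x = (f^^j) u" "j < k" unfolding orbfu by blast
    show "x \<in> orb g u \<union> orb g v"
    proof (cases "j = 0 \<or> m < j")
      case True then have "x \<in> orb g u" unfolding orbgu using j by blast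
      then show ?thesis by blast
    next
      case False then have "x \<in> orb g v" unfolding orbgv using j by auto
      then show ?thesis by blast
    qed
  qed
  show "orb g u \<inter> orb g v = {}"
  proof (rule ccontr)
    assume "orb g u \<inter> orb g v \<noteq> {}"
    then obtain x where "x \<in> orb g u" "x \<in> orb g v" by blast
    then obtain i j where ij: "x = (f^^i) u" "i = 0 \<or> (m < i \<and> i < k)"
      "x = (f^^j) u" "0 < j" "j \<le> m" unfolding orbgu orbgv by blast
    have "i = j" using dist[of i j] ij m k by auto
    then show False using ij by auto
  qed
  show "orb g w = orb f w" if w: "w \<notin> orb f u" for w
  proof (rule orb_same_funpow)
    fix n
    show "(g ^^ n) w = (f ^^ n) w"
    proof (induction n)
      case 0 then show ?case by simp
    next
      case (Suc n)
      have inw: "(f^^n) w \<in> orb f w" by simp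
      have "(f^^n) w \<noteq> u"
      proof
        assume "(f^^n) w = u"
        then have "u \<in> orb f w" using inw by simp
        then have "w \<in> orb f u" using orb_sym[OF perm] by blast
        then show False using w by simp
      qed
      moreover have "(f^^n) w \<noteq> v"
      proof
        assume "(f^^n) w = v"
        then have "v \<in> orb f w" using inw by simp
        then have "orb f v = orb f w" using orb_eq[OF perm] by blast
        moreover have "orb f v = orb f u" using orb_eq[OF perm uv(2)] .
        ultimately show False using w self_in_orb[of w f] by simp
      qed
      ultimately show ?case using Suc by (simp add: g_def)
    qed
  qed
qed

lemma permutation_transp: "permutation f \<Longrightarrow> permutation (f \<circ> transpose u v)"
  by (simp add: permutation_compose permutation_swap_id)

lemma orb_closed_transp:
  assumes "f ` X \<subseteq> X" "u \<in> X" "v \<in> X"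
  shows "(f \<circ> transpose u v) ` X \<subseteq> X"
  using assms by (auto simp: transpose_def)

lemma z_same:
  assumes perm: "permutation f" and X: "finite X" "f ` X \<subseteq> X" "u \<in> X"
    and uv: "u \<noteq> v" "v \<in> orb f u"
  shows "card (orb (f \<circ> transpose u v) ` X) = Suc (card (orb f ` X))"
proof -
  define g where "g = f \<circ> transpose u v"
  define Ob where "Ob = orb f u"
  have permg: "permutation g" unfolding g_def using permutation_transp[OF perm] .
  have OX: "Ob \<subseteq> X" unfolding Ob_def using orb_closed[OF X(2,3)] .
  note T = transp_same[OF perm uv, folded g_def]
  have A: "orb f ` X = insert Ob (orb f ` (X - Ob))"
  proof (intro set_eqI iffI)
    fix S assume "S \<in> orb f ` X"
    then obtain x where x: "x \<in> X" "S = orb f x" by blast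
    show "S \<in> insert Ob (orb f ` (X - Ob))"
    proof (cases "x \<in> Ob")
      case True then have "S = Ob" using x orb_eq[OF perm] Ob_def by blast
      then show ?thesis by simp
    next
      case False then show ?thesis using x by blast
    qed
  next
    fix S assume "S \<in> insert Ob (orb f ` (X - Ob))"
    then show "S \<in> orb f ` X" using X(3) unfolding Ob_def by blast
  qed
  have notin: "S \<notin> orb f ` (X - Ob)" if "S \<subseteq> Ob" "y \<in> S" for S y
  proof
    assume "S \<in> orb f ` (X - Ob)"
    then obtain x where x: "x \<in> X" "x \<notin> Ob" "S = orb f x" by blast
    then have "y \<in> orb f x" "y \<in> Ob" using that by auto
    then have "orb f x = Ob" using orb_disj[OF perm] Ob_def by blast
    then show False using x self_in_orb[of x f] by simp
  qed
  have B: "Ob \<notin> orb f ` (X - Ob)" using notin[of Ob u] Ob_def by simp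
  have vO: "v \<in> Ob" using uv Ob_def by simp
  have C: "orb g ` X = insert (orb g u) (insert (orb g v) (orb f ` (X - Ob)))"
  proof (intro set_eqI iffI)
    fix S assume "S \<in> orb g ` X"
    then obtain x where x: "x \<in> X" "S = orb g x" by blast
    show "S \<in> insert (orb g u) (insert (orb g v) (orb f ` (X - Ob)))"
    proof (cases "x \<in> Ob")
      case True
      then have "x \<in> orb g u \<or> x \<in> orb g v" using T(1) Ob_def by blast
      then have "S = orb g u \<or> S = orb g v" using x orb_eq[OF permg] by blast
      then show ?thesis by blast
    next
      case False then have "S = orb f x" using x T(3) Ob_def by simp
      then show ?thesis using x False by blast
    qed
  next
    fix S assume S: "S \<in> insert (orb g u) (insert (orb g v) (orb f ` (X - Ob)))"
    have "orb g u \<in> orb g ` X" using X(3) by simp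
    moreover have "orb g v \<in> orb g ` X" using vO OX by auto
    moreover have "orb f ` (X - Ob) \<subseteq> orb g ` X"
    proof
      fix S assume "S \<in> orb f ` (X - Ob)"
      then obtain x where "x \<in> X" "x \<notin> Ob" "S = orb f x" by blast
      then show "S \<in> orb g ` X" using T(3)[of x] Ob_def by blast
    qed
    ultimately show "S \<in> orb g ` X" using S by blast
  qed
  have D1: "orb g u \<notin> orb f ` (X - Ob)"
    by (rule notin[of "orb g u" u]) (use T(1) Ob_def in auto)
  have D2: "orb g v \<notin> orb f ` (X - Ob)"
    by (rule notin[of "orb g v" v]) (use T(1) Ob_def in auto)
  have D3: "orb g u \<noteq> orb g v" using T(2) self_in_orb[of u g] by blast
  have fin: "finite (orb f ` (X - Ob))" using X(1) by simp
  have "card (orb g ` X) = Suc (Suc (card (orb f ` (X - Ob))))"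
    unfolding C using D1 D2 D3 fin by simp
  moreover have "card (orb f ` X) = Suc (card (orb f ` (X - Ob)))"
    unfolding A using B fin by simp
  ultimately show ?thesis unfolding g_def by simp
qed

lemma transp_reach:
  assumes perm: "permutation f" and uv: "u \<noteq> v" "v \<notin> orb f u"
  shows "v \<in> orb (f \<circ> transpose u v) u"
proof -
  define g where "g = f \<circ> transpose u v"
  define k where "k = least_power f v"
  have k: "(f^^k) v = v" "k > 0" using least_power_of_permutation[OF perm] k_def by auto
  have unv: "u \<notin> orb f v" using orb_sym[OF perm] uv(2) by blast
  have gu: "(g^^i) u = (f^^i) v" if "1 \<le> i" "i \<le> k" for i
    using that
  proof (induction i)
    case 0 then show ?case by simp
  next
    case (Suc i)
    show ?case
    proof (cases "i = 0")
      case True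
      then show ?thesis by (simp add: g_def)
    next
      case False
      then have IH: "(g^^i) u = (f^^i) v" using Suc by simp
      have ne1: "(f^^i) v \<noteq> u" using unv funpow_in_orb[of i f v] by auto
      have ne2: "(f^^i) v \<noteq> v"
        using funpow_distinct[OF perm, of 0 i v] False Suc.prems k_def by simp
      have "(g^^Suc i) u = g ((f^^i) v)" using IH by simp
      also have "\<dots> = f ((f^^i) v)" using ne1 ne2 by (simp add: g_def)
      also have "\<dots> = (f^^(Suc i)) v" by simp
      finally show ?thesis .
    qed
  qed
  have "(g^^k) u = v" using gu[of k] k by simp
  then show ?thesis using funpow_in_orb[of k g u] unfolding g_def by simp
qed

lemma z_diff:
  assumes perm: "permutation f" and X: "finite X" "f ` X \<subseteq> X" "u \<in> X" "v \<in> X"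
    and uv: "u \<noteq> v" "v \<notin> orb f u"
  shows "card (orb f ` X) = Suc (card (orb (f \<circ> transpose u v) ` X))"
proof -
  define g where "g = f \<circ> transpose u v"
  have permg: "permutation g" unfolding g_def using permutation_transp[OF perm] .
  have gX: "g ` X \<subseteq> X" unfolding g_def using orb_closed_transp[OF X(2,3,4)] .
  have r: "v \<in> orb g u" unfolding g_def using transp_reach[OF perm uv] .
  have "g \<circ> transpose u v = f" unfolding g_def by (simp add: fun_eq_iff)
  then show ?thesis using z_same[OF permg X(1) gX X(3) uv(1) r] unfolding g_def by simp
qed


definition zc :: "('d \<Rightarrow> 'd) \<Rightarrow> 'd set \<Rightarrow> nat" where
  "zc f X = card (orb f ` X)"

definition Gr :: "('d \<Rightarrow> 'd) \<Rightarrow> ('d \<Rightarrow> 'd) \<Rightarrow> 'd set \<Rightarrow> 'd rel" where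
  "Gr s a X = {(w, s w) | w. w \<in> X} \<union> {(w, a w) | w. w \<in> X}"

definition cmp :: "('d \<Rightarrow> 'd) \<Rightarrow> ('d \<Rightarrow> 'd) \<Rightarrow> 'd set \<Rightarrow> 'd \<Rightarrow> 'd set" where
  "cmp s a X x = {y. (x, y) \<in> (Gr s a X \<union> (Gr s a X)\<inverse>)\<^sup>*}"

definition cc :: "('d \<Rightarrow> 'd) \<Rightarrow> ('d \<Rightarrow> 'd) \<Rightarrow> 'd set \<Rightarrow> nat" where
  "cc s a X = card (cmp s a X ` X)"

definition dfc :: "('d \<Rightarrow> 'd) \<Rightarrow> ('d \<Rightarrow> 'd) \<Rightarrow> 'd set \<Rightarrow> int" where
  "dfc s a X = int (card X) + 2 * int (cc s a X) - int (zc s X) - int (zc a X) - int (zc (s \<circ> a) X)"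

definition good :: "('d \<Rightarrow> 'd) \<Rightarrow> ('d \<Rightarrow> 'd) \<Rightarrow> 'd set \<Rightarrow> bool" where
  "good s a X \<longleftrightarrow> finite X \<and> permutation s \<and> permutation a \<and> s ` X \<subseteq> X \<and> a ` X \<subseteq> X
     \<and> (\<forall>w. a (a w) = w)"

lemma self_in_comp[simp]: "x \<in> cmp s a X x"
  unfolding cmp_def by simp

lemma comp_sym: "y \<in> cmp s a X x \<Longrightarrow> x \<in> cmp s a X y"
proof -
  let ?R = "Gr s a X"
  assume "y \<in> cmp s a X x"
  then have "(x, y) \<in> (?R \<union> ?R\<inverse>)\<^sup>*" unfolding cmp_def by simp
  then have "(y, x) \<in> ((?R \<union> ?R\<inverse>)\<inverse>)\<^sup>*" by (rule rtrancl_converseI)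
  then have "(y, x) \<in> (?R \<union> ?R\<inverse>)\<^sup>*" by (simp add: converse_Un Un_commute)
  then show ?thesis unfolding cmp_def by simp
qed

lemma comp_trans: "y \<in> cmp s a X x \<Longrightarrow> z \<in> cmp s a X y \<Longrightarrow> z \<in> cmp s a X x"
  unfolding cmp_def using rtrancl_trans[of x y _ z] by simp

lemma comp_eq:
  assumes yx: "y \<in> cmp s a X x" shows "cmp s a X y = cmp s a X x"
proof
  show "cmp s a X y \<subseteq> cmp s a X x" using comp_trans[OF yx] by blast
  have xy: "x \<in> cmp s a X y" using comp_sym[OF yx] .
  show "cmp s a X x \<subseteq> cmp s a X y" using comp_trans[OF xy] by blast
qed

lemma comp_edge:
  assumes "(p, q) \<in> Gr s a X \<union> (Gr s a X)\<inverse>" "p \<in> cmp s a X x"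
  shows "q \<in> cmp s a X x"
proof -
  have "(x, p) \<in> (Gr s a X \<union> (Gr s a X)\<inverse>)\<^sup>*" using assms(2) unfolding cmp_def by simp
  then have "(x, q) \<in> (Gr s a X \<union> (Gr s a X)\<inverse>)\<^sup>*" using assms(1) by (rule rtrancl_into_rtrancl)
  then show ?thesis unfolding cmp_def by simp
qed

lemma Gr_s: "w \<in> X \<Longrightarrow> (w, s w) \<in> Gr s a X" unfolding Gr_def by blast
lemma Gr_a: "w \<in> X \<Longrightarrow> (w, a w) \<in> Gr s a X" unfolding Gr_def by blast

lemma comp_step_s: "w \<in> X \<Longrightarrow> w \<in> cmp s a X x \<Longrightarrow> s w \<in> cmp s a X x"
  using comp_edge[of "w" "s w" s a X x] Gr_s[of w X s a] by blast

lemma comp_step_a: "w \<in> X \<Longrightarrow> w \<in> cmp s a X x \<Longrightarrow> a w \<in> cmp s a X x"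
  using comp_edge[of "w" "a w" s a X x] Gr_a[of w X a s] by blast

lemma comp_step_s': "w \<in> X \<Longrightarrow> s w \<in> cmp s a X x \<Longrightarrow> w \<in> cmp s a X x"
  using comp_edge[of "s w" "w" s a X x] Gr_s[of w X s a] by blast

lemma comp_step_a': "w \<in> X \<Longrightarrow> a w \<in> cmp s a X x \<Longrightarrow> w \<in> cmp s a X x"
  using comp_edge[of "a w" "w" s a X x] Gr_a[of w X a s] by blast

lemma orb_sub_comp_s:
  assumes "s ` X \<subseteq> X" "x \<in> X" shows "orb s x \<subseteq> cmp s a X x"
proof -
  have "(s ^^ n) x \<in> cmp s a X x \<and> (s ^^ n) x \<in> X" for n
  proof (induction n)
    case 0 then show ?case using assms by simp
  next
    case (Suc n) then show ?case using assms comp_step_s[of "(s^^n) x" X s a x] by auto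
  qed
  then show ?thesis unfolding orb_def by blast
qed

lemma orb_sub_comp_a:
  assumes "a ` X \<subseteq> X" "x \<in> X" shows "orb a x \<subseteq> cmp s a X x"
proof -
  have "(a ^^ n) x \<in> cmp s a X x \<and> (a ^^ n) x \<in> X" for n
  proof (induction n)
    case 0 then show ?case using assms by simp
  next
    case (Suc n) then show ?case using assms comp_step_a[of "(a^^n) x" X s a x] by auto
  qed
  then show ?thesis unfolding orb_def by blast
qed

lemma orb_sub_comp_sa:
  assumes "s ` X \<subseteq> X" "a ` X \<subseteq> X" "x \<in> X" shows "orb (s \<circ> a) x \<subseteq> cmp s a X x"
proof -
  have "((s \<circ> a) ^^ n) x \<in> cmp s a X x \<and> ((s \<circ> a) ^^ n) x \<in> X" for n
  proof (induction n)
    case 0 then show ?case using assms by simp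
  next
    case (Suc n)
    let ?y = "((s \<circ> a) ^^ n) x"
    have y: "?y \<in> cmp s a X x" "?y \<in> X" using Suc.IH by (rule conjunct1, rule conjunct2)
    have "a ?y \<in> cmp s a X x" "a ?y \<in> X" using y assms comp_step_a[of ?y X s a x] by auto
    then have "s (a ?y) \<in> cmp s a X x" "s (a ?y) \<in> X" using assms comp_step_s[of "a ?y" X s a x] by auto
    moreover have eq: "((s \<circ> a) ^^ Suc n) x = s (a ?y)" by simp
    ultimately show ?case unfolding eq by blast
  qed
  then show ?thesis unfolding orb_def by blast
qed

lemma comp_induct:
  assumes "y \<in> cmp s a X x" "P x"
    and "\<And>p q. P p \<Longrightarrow> (p, q) \<in> Gr s a X \<union> (Gr s a X)\<inverse> \<Longrightarrow> P q"
  shows "P y"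
proof -
  have "(x, y) \<in> (Gr s a X \<union> (Gr s a X)\<inverse>)\<^sup>*" using assms(1) unfolding cmp_def by simp
  then show ?thesis
  proof (induction rule: rtrancl_induct)
    case base then show ?case using assms(2) .
  next
    case (step y z) then show ?case using assms(3)[of y z] by simp
  qed
qed

lemma comp_subI:
  assumes "\<And>p q. (p, q) \<in> Gr s a X \<Longrightarrow> q \<in> cmp s' a' X' p"
  shows "cmp s a X x \<subseteq> cmp s' a' X' x"
proof
  fix y assume "y \<in> cmp s a X x"
  then show "y \<in> cmp s' a' X' x"
  proof (rule comp_induct)
    show "x \<in> cmp s' a' X' x" by simp
  next
    fix p q assume p: "p \<in> cmp s' a' X' x" and pq: "(p, q) \<in> Gr s a X \<union> (Gr s a X)\<inverse>"
    then consider "(p, q) \<in> Gr s a X" | "(q, p) \<in> Gr s a X" by blast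
    then show "q \<in> cmp s' a' X' x"
    proof cases
      case 1 then have "q \<in> cmp s' a' X' p" using assms by simp
      then show ?thesis using comp_trans[OF p] by simp
    next
      case 2 then have "p \<in> cmp s' a' X' q" using assms by simp
      then have "q \<in> cmp s' a' X' p" using comp_sym by metis
      then show ?thesis using comp_trans[OF p] by simp
    qed
  qed
qed


lemma Gr_cases:
  assumes "(p, q) \<in> Gr s a X \<union> (Gr s a X)\<inverse>"
  obtains w where "w \<in> X" "(p = w \<and> q = s w) \<or> (q = w \<and> p = s w)"
        | w where "w \<in> X" "(p = w \<and> q = a w) \<or> (q = w \<and> p = a w)"
  using assms unfolding Gr_def by blast

lemma Gr_I_s: "w \<in> X \<Longrightarrow> (p = w \<and> q = s w) \<or> (q = w \<and> p = s w) \<Longrightarrow> (p, q) \<in> Gr s a X \<union> (Gr s a X)\<inverse>"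
  unfolding Gr_def by blast

lemma Gr_I_a: "w \<in> X \<Longrightarrow> (p = w \<and> q = a w) \<or> (q = w \<and> p = a w) \<Longrightarrow> (p, q) \<in> Gr s a X \<union> (Gr s a X)\<inverse>"
  unfolding Gr_def by blast

lemma cmp_split_sub:
  assumes "u \<in> X" "s ` X \<subseteq> X"
  shows "cmp (s \<circ> transpose u (s u)) a X x \<subseteq> cmp s a X x"
proof (rule comp_subI)
  fix p q assume "(p, q) \<in> Gr (s \<circ> transpose u (s u)) a X"
  then consider w where "w \<in> X" "p = w" "q = s (transpose u (s u) w)" | w where "w \<in> X" "p = w" "q = a w"
    unfolding Gr_def by auto
  then show "q \<in> cmp s a X p"
  proof cases
    case 1
    show ?thesis
    proof (cases "w = u")
      case True
      have "s u \<in> cmp s a X p" using 1 True comp_step_s[of u X s a p] by simp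
      moreover have "s u \<in> X" using assms by blast
      ultimately have "s (s u) \<in> cmp s a X p" using comp_step_s[of "s u" X s a p] by simp
      then show ?thesis using 1 True by simp
    next
      case False
      show ?thesis
      proof (cases "w = s u")
        case True then show ?thesis using 1 False by simp
      next
        case False2: False
        then show ?thesis using 1 False comp_step_s[of w X s a p] by simp
      qed
    qed
  next
    case 2 then show ?thesis using comp_step_a[of w X s a p] by simp
  qed
qed

lemma cmp_split_eq:
  assumes "u \<in> X" "s ` X \<subseteq> X" "s u \<in> cmp (s \<circ> transpose u (s u)) a X u"
  shows "cmp (s \<circ> transpose u (s u)) a X x = cmp s a X x"
proof
  show "cmp (s \<circ> transpose u (s u)) a X x \<subseteq> cmp s a X x" using cmp_split_sub assms(1,2) .
  let ?s = "s \<circ> transpose u (s u)"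
  show "cmp s a X x \<subseteq> cmp ?s a X x"
  proof (rule comp_subI)
    fix p q assume "(p, q) \<in> Gr s a X"
    then consider w where "w \<in> X" "p = w" "q = s w" | w where "w \<in> X" "p = w" "q = a w"
      unfolding Gr_def by auto
    then show "q \<in> cmp ?s a X p"
    proof cases
      case 1
      show ?thesis
      proof (cases "w = u")
        case True then show ?thesis using 1 assms(3) by simp
      next
        case False
        show ?thesis
        proof (cases "w = s u")
          case True
          have su: "s u \<in> X" using assms by blast
          have A1: "?s u \<in> cmp ?s a X u" using comp_step_s[of u X ?s a u] assms(1) by simp
          have A2: "u \<in> cmp ?s a X (s u)" using comp_sym[OF assms(3)] .
          have "?s u \<in> cmp ?s a X (s u)" using comp_trans[OF A2 A1] .
          then show ?thesis using 1 True by simp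
        next
          case False2: False
          have "?s w \<in> cmp ?s a X w" using comp_step_s[of w X ?s a w] 1 by simp
          then show ?thesis using 1 False False2 by simp
        qed
      qed
    next
      case 2 then show ?thesis using comp_step_a[of w X ?s a p] by simp
    qed
  qed
qed

lemma cmp_split_out:
  assumes u: "u \<in> X" and sX: "s ` X \<subseteq> X" and x: "x \<notin> cmp s a X u"
  shows "cmp (s \<circ> transpose u (s u)) a X x = cmp s a X x"
proof
  let ?s = "s \<circ> transpose u (s u)"
  show "cmp ?s a X x \<subseteq> cmp s a X x" using cmp_split_sub u sX .
  show "cmp s a X x \<subseteq> cmp ?s a X x"
  proof
    fix y assume "y \<in> cmp s a X x"
    then have "y \<in> cmp ?s a X x \<and> y \<notin> cmp s a X u"
    proof (rule comp_induct)
      show "x \<in> cmp ?s a X x \<and> x \<notin> cmp s a X u" using x by simp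
    next
      fix p q assume P: "p \<in> cmp ?s a X x \<and> p \<notin> cmp s a X u"
        and pq: "(p, q) \<in> Gr s a X \<union> (Gr s a X)\<inverse>"
      have qnot: "q \<notin> cmp s a X u"
      proof
        assume q: "q \<in> cmp s a X u"
        have "q \<in> cmp s a X p" using comp_edge[OF pq] by simp
        then have "p \<in> cmp s a X q" using comp_sym by metis
        then have "p \<in> cmp s a X u" using comp_trans[OF q] by simp
        then show False using P by simp
      qed
      have uC: "u \<in> cmp s a X u" by simp
      have vC: "s u \<in> cmp s a X u" using comp_step_s[of u X s a u] u by simp
      have "(p, q) \<in> Gr ?s a X \<union> (Gr ?s a X)\<inverse>"
      proof (rule Gr_cases[OF pq])
        fix w assume w: "w \<in> X" "(p = w \<and> q = s w) \<or> (q = w \<and> p = s w)"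
        then have "w \<noteq> u" "w \<noteq> s u" using P qnot uC vC by auto
        then have "?s w = s w" by simp
        then show ?thesis using Gr_I_s[of w X p q ?s a] w by simp
      next
        fix w assume w: "w \<in> X" "(p = w \<and> q = a w) \<or> (q = w \<and> p = a w)"
        then show ?thesis using Gr_I_a[of w X p q a ?s] by simp
      qed
      then have "q \<in> cmp ?s a X x" using comp_edge[of p q ?s a X x] conjunct1[OF P] by simp
      then show "q \<in> cmp ?s a X x \<and> q \<notin> cmp s a X u" using qnot by simp
    qed
    then show "y \<in> cmp ?s a X x" by simp
  qed
qed

lemma cmp_split_in:
  assumes u: "u \<in> X" and sX: "s ` X \<subseteq> X" and x: "x \<in> cmp s a X u"
  shows "cmp (s \<circ> transpose u (s u)) a X x = cmp (s \<circ> transpose u (s u)) a X u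
       \<or> cmp (s \<circ> transpose u (s u)) a X x = cmp (s \<circ> transpose u (s u)) a X (s u)"
proof -
  let ?s = "s \<circ> transpose u (s u)"
  have su: "s u \<in> X" using u sX by blast
  have ssu: "s (s u) \<in> cmp ?s a X u" using comp_step_s[of u X ?s a u] u by simp
  have "x \<in> cmp ?s a X u \<or> x \<in> cmp ?s a X (s u)"
    using x
  proof (rule comp_induct)
    show "u \<in> cmp ?s a X u \<or> u \<in> cmp ?s a X (s u)" by simp
  next
    fix p q assume P: "p \<in> cmp ?s a X u \<or> p \<in> cmp ?s a X (s u)"
      and pq: "(p, q) \<in> Gr s a X \<union> (Gr s a X)\<inverse>"
    show "q \<in> cmp ?s a X u \<or> q \<in> cmp ?s a X (s u)"
    proof (cases "q \<in> {u, s u, s (s u)}")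
      case True
      then consider "q = u" | "q = s u" | "q = s (s u)" by blast
      then show ?thesis
      proof cases
        case 1 then show ?thesis by simp
      next
        case 2 then show ?thesis by simp
      next
        case 3 then show ?thesis using ssu by simp
      qed
    next
      case False
      have "(p, q) \<in> Gr ?s a X \<union> (Gr ?s a X)\<inverse>"
      proof (rule Gr_cases[OF pq])
        fix w assume w: "w \<in> X" "(p = w \<and> q = s w) \<or> (q = w \<and> p = s w)"
        have "w \<noteq> u" "w \<noteq> s u"
        proof -
          show "w \<noteq> u" using w(2) False by auto
          show "w \<noteq> s u" using w(2) False by auto
        qed
        then have "?s w = s w" by simp
        then show ?thesis using Gr_I_s[of w X p q ?s a] w by simp
      next
        fix w assume w: "w \<in> X" "(p = w \<and> q = a w) \<or> (q = w \<and> p = a w)"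
        then show ?thesis using Gr_I_a[of w X p q a ?s] by simp
      qed
      note E = this
      from P show ?thesis
      proof
        assume "p \<in> cmp ?s a X u" then show ?thesis using comp_edge[OF E] by simp
      next
        assume "p \<in> cmp ?s a X (s u)" then show ?thesis using comp_edge[OF E] by simp
      qed
    qed
  qed
  then show ?thesis
  proof
    assume "x \<in> cmp ?s a X u" then show ?thesis using comp_eq[of x ?s a X u] by simp
  next
    assume "x \<in> cmp ?s a X (s u)" then show ?thesis using comp_eq[of x ?s a X "s u"] by simp
  qed
qed


lemma card_insert_le_Suc: "finite A \<Longrightarrow> card (insert x A) \<le> Suc (card A)"
  by (simp add: card_insert_if)

lemma cc_split_le:
  assumes X: "finite X" and u: "u \<in> X" and sX: "s ` X \<subseteq> X"
  shows "cc (s \<circ> transpose u (s u)) a X \<le> Suc (cc s a X)"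
proof -
  let ?s = "s \<circ> transpose u (s u)"
  let ?C = "cmp s a X u"
  have sub: "cmp ?s a X ` X \<subseteq> insert (cmp ?s a X u) (insert (cmp ?s a X (s u)) (cmp s a X ` X - {?C}))"
  proof
    fix S assume "S \<in> cmp ?s a X ` X"
    then obtain x where x: "x \<in> X" "S = cmp ?s a X x" by blast
    show "S \<in> insert (cmp ?s a X u) (insert (cmp ?s a X (s u)) (cmp s a X ` X - {?C}))"
    proof (cases "x \<in> ?C")
      case True
      then have "S = cmp ?s a X u \<or> S = cmp ?s a X (s u)" using cmp_split_in[OF u sX True] x by simp
      then show ?thesis by blast
    next
      case False
      then have "S = cmp s a X x" using cmp_split_out[OF u sX False] x by simp
      moreover have "cmp s a X x \<noteq> ?C"
      proof
        assume "cmp s a X x = ?C" then have "x \<in> ?C" using self_in_comp[of x s a X] by simp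
        then show False using False by simp
      qed
      ultimately show ?thesis using x by blast
    qed
  qed
  have fin: "finite (cmp s a X ` X - {?C})" using X by simp
  have "cc ?s a X \<le> card (insert (cmp ?s a X u) (insert (cmp ?s a X (s u)) (cmp s a X ` X - {?C})))"
    unfolding cc_def by (rule card_mono) (use fin sub in simp_all)
  also have "\<dots> \<le> Suc (Suc (card (cmp s a X ` X - {?C})))"
    using card_insert_le_Suc[of "insert (cmp ?s a X (s u)) (cmp s a X ` X - {?C})" "cmp ?s a X u"]
      card_insert_le_Suc[OF fin, of "cmp ?s a X (s u)"] fin by simp
  also have "card (cmp s a X ` X - {?C}) = cc s a X - 1"
    unfolding cc_def using u by simp
  also have "cc s a X \<ge> 1"
  proof -
    have "?C \<in> cmp s a X ` X" using u by blast
    then have "card (cmp s a X ` X) > 0" using X card_gt_0_iff by blast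
    then show ?thesis unfolding cc_def by simp
  qed
  then have "Suc (Suc (cc s a X - 1)) = Suc (cc s a X)" by simp
  finally show ?thesis .
qed

lemma phi_eq:
  assumes inv: "\<forall>w. a (a w) = w"
  shows "(s \<circ> transpose u (s u)) \<circ> a = (s \<circ> a) \<circ> transpose (a u) (a (s u))"
proof
  fix w
  show "((s \<circ> transpose u (s u)) \<circ> a) w = ((s \<circ> a) \<circ> transpose (a u) (a (s u))) w"
  proof (cases "w = a u")
    case True then show ?thesis using inv by (simp add: transpose_def)
  next
    case F1: False
    show ?thesis
    proof (cases "w = a (s u)")
      case True then show ?thesis using inv F1 by (simp add: transpose_def)
    next
      case False
      have "a w \<noteq> u" using F1 inv by metis
      moreover have "a w \<noteq> s u" using False inv by metis
      ultimately show ?thesis using F1 False by (simp add: transpose_def)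
    qed
  qed
qed

lemma transpose_transpose_comp: "(f \<circ> transpose x y) \<circ> transpose x y = f"
  by (simp add: fun_eq_iff)

lemma split_step:
  assumes g: "good s a X" and u: "u \<in> X" "s u \<noteq> u"
  shows "dfc (s \<circ> transpose u (s u)) a X \<le> dfc s a X"
        "even (dfc s a X - dfc (s \<circ> transpose u (s u)) a X)"
proof -
  let ?v = "s u"
  let ?s = "s \<circ> transpose u ?v"
  let ?f = "s \<circ> a" and ?f' = "?s \<circ> a"
  have X: "finite X" and ps: "permutation s" and pa: "permutation a" and sX: "s ` X \<subseteq> X"
    and aX: "a ` X \<subseteq> X" and inv: "\<forall>w. a (a w) = w" using g unfolding good_def by auto
  have vX: "?v \<in> X" using u sX by blast
  have auX: "a u \<in> X" "a ?v \<in> X" using u vX aX by auto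
  have auv: "a u \<noteq> a ?v"
  proof
    assume "a u = a ?v" then have "a (a u) = a (a ?v)" by simp
    then show False using inv u(2) by simp
  qed
  have pf: "permutation ?f" using ps pa by (rule permutation_compose)
  have pf': "permutation ?f'" using permutation_transp[OF ps] pa by (rule permutation_compose)
  have fX: "?f ` X \<subseteq> X" using sX aX by (auto simp: image_subset_iff)
  have f'X: "?f' ` X \<subseteq> X" using orb_closed_transp[OF sX u(1) vX] aX by (auto simp: image_subset_iff)
  have feq: "?f' = ?f \<circ> transpose (a u) (a ?v)" using phi_eq[OF inv] .
  have "?f' \<circ> transpose (a u) (a ?v) = ?f" unfolding feq by (rule transpose_transpose_comp)
  then have feq2: "?f = ?f' \<circ> transpose (a u) (a ?v)" by (rule sym)
  have zs: "zc ?s X = Suc (zc s X)"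
    unfolding zc_def
    by (rule z_same[OF ps X sX u(1)]) (use u(2) funpow_in_orb[of 1 s u] in auto)
  have zf: "int (zc ?f' X) = int (zc ?f X) + 1 \<or> int (zc ?f X) = int (zc ?f' X) + 1"
  proof (cases "a ?v \<in> orb ?f (a u)")
    case True
    then have "zc ?f' X = Suc (zc ?f X)" unfolding zc_def feq
      by (rule z_same[OF pf X fX auX(1) auv])
    then show ?thesis by simp
  next
    case False
    then have "zc ?f X = Suc (zc ?f' X)" unfolding zc_def feq
      by (rule z_diff[OF pf X fX auX auv])
    then show ?thesis by simp
  qed
  have "dfc ?s a X \<le> dfc s a X \<and> even (dfc s a X - dfc ?s a X)"
  proof (cases "?v \<in> cmp ?s a X u")
    case True
    have "cmp ?s a X = cmp s a X" using cmp_split_eq[OF u(1) sX True] by (simp add: fun_eq_iff)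
    then have "cc ?s a X = cc s a X" unfolding cc_def by simp
    have zs': "int (zc ?s X) = int (zc s X) + 1" using zs by simp
    have "dfc ?s a X = dfc s a X - 2 \<or> dfc ?s a X = dfc s a X"
      unfolding dfc_def using zs' zf \<open>cc ?s a X = cc s a X\<close> by linarith
    then show ?thesis by auto
  next
    case False
    have ccle: "cc ?s a X \<le> Suc (cc s a X)" using cc_split_le[OF X u(1) sX] .
    have c1: "orb ?f' (a u) \<subseteq> cmp ?s a X (a u)"
      by (rule orb_sub_comp_sa[OF orb_closed_transp[OF sX u(1) vX] aX auX(1)])
    have c2: "cmp ?s a X (a u) = cmp ?s a X u"
      using comp_eq[of "a u" ?s a X u] comp_step_a[of u X ?s a u] u(1) by simp
    have "a ?v \<notin> orb ?f' (a u)"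
    proof
      assume "a ?v \<in> orb ?f' (a u)"
      then have "a ?v \<in> cmp ?s a X u" using c1 c2 by blast
      then have "?v \<in> cmp ?s a X u" using comp_step_a'[of ?v X a ?s u] vX by simp
      then show False using False by simp
    qed
    then have "zc ?f' X = Suc (zc (?f' \<circ> transpose (a u) (a ?v)) X)" unfolding zc_def
      by (rule z_diff[OF pf' X f'X auX auv])
    then have "zc ?f' X = Suc (zc ?f X)" using feq2 by simp
    have zs': "int (zc ?s X) = int (zc s X) + 1" using zs by simp
    have zf': "int (zc ?f' X) = int (zc ?f X) + 1" using \<open>zc ?f' X = Suc (zc ?f X)\<close> by simp
    have ccle': "int (cc ?s a X) \<le> int (cc s a X) + 1" using ccle by simp
    have "dfc ?s a X = dfc s a X + 2 * (int (cc ?s a X) - int (cc s a X)) - 2"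
      unfolding dfc_def using zs' zf' by simp
    then show ?thesis using ccle' by presburger
  qed
  then show "dfc ?s a X \<le> dfc s a X" "even (dfc s a X - dfc ?s a X)" by auto
qed


lemma orb_fixed: "s x = x \<Longrightarrow> orb s x = {x}"
proof -
  assume "s x = x"
  then have "(s ^^ n) x = x" for n by (induction n) auto
  then show ?thesis unfolding orb_def by auto
qed

lemma orb_in_closed: "a ` X \<subseteq> X \<Longrightarrow> x \<in> X \<Longrightarrow> (a ^^ n) x \<in> X"
  by (induction n) auto

lemma dfc_base:
  assumes g: "good s a X" and fx: "\<forall>x\<in>X. s x = x"
  shows "dfc s a X = 0"
proof -
  have X: "finite X" and aX: "a ` X \<subseteq> X" and inv: "\<forall>w. a (a w) = w"
    using g unfolding good_def by auto
  have z1: "zc s X = card X"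
  proof -
    have "orb s ` X = (\<lambda>x. {x}) ` X" using fx orb_fixed by (metis (no_types, lifting) image_cong)
    moreover have "card ((\<lambda>x. {x}) ` X) = card X" by (rule card_image) (simp add: inj_on_def)
    ultimately show ?thesis unfolding zc_def by simp
  qed
  have z2: "zc (s \<circ> a) X = zc a X"
  proof -
    have "orb (s \<circ> a) x = orb a x" if x: "x \<in> X" for x
    proof (rule orb_same_funpow)
      fix n show "((s \<circ> a) ^^ n) x = (a ^^ n) x"
      proof (induction n)
        case 0 then show ?case by simp
      next
        case (Suc n)
        have "a ((a ^^ n) x) \<in> X" using orb_in_closed[OF aX x, of "Suc n"] by simp
        then show ?case using Suc fx by simp
      qed
    qed
    then have "orb (s \<circ> a) ` X = orb a ` X" by (rule image_cong[OF refl])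
    then show ?thesis unfolding zc_def by simp
  qed
  have c: "cc s a X = zc a X"
  proof -
    have "cmp s a X x = orb a x" if x: "x \<in> X" for x
    proof
      show "orb a x \<subseteq> cmp s a X x" using orb_sub_comp_a[OF aX x] .
      show "cmp s a X x \<subseteq> orb a x"
      proof
        fix y assume "y \<in> cmp s a X x"
        then show "y \<in> orb a x"
        proof (rule comp_induct)
          show "x \<in> orb a x" by simp
        next
          fix p q assume p: "p \<in> orb a x" and pq: "(p, q) \<in> Gr s a X \<union> (Gr s a X)\<inverse>"
          obtain n where pn: "p = (a ^^ n) x" using p unfolding orb_def by blast
          have ap: "a p \<in> orb a x" using pn funpow_in_orb[of "Suc n" a x] by simp
          show "q \<in> orb a x"
          proof (rule Gr_cases[OF pq])
            fix w assume "w \<in> X" "(p = w \<and> q = s w) \<or> (q = w \<and> p = s w)"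
            then have "q = p" using fx by auto
            then show ?thesis using p by simp
          next
            fix w assume "w \<in> X" "(p = w \<and> q = a w) \<or> (q = w \<and> p = a w)"
            then have "q = a p" using inv by auto
            then show ?thesis using ap by simp
          qed
        qed
      qed
    qed
    then have "cmp s a X ` X = orb a ` X" by (rule image_cong[OF refl])
    then show ?thesis unfolding zc_def cc_def by simp
  qed
  show ?thesis unfolding dfc_def using z1 z2 c by simp
qed

lemma dfc_nonneg:
  assumes "good s a X"
  shows "0 \<le> dfc s a X \<and> even (dfc s a X)"
  using assms
proof (induction "card {x \<in> X. s x \<noteq> x}" arbitrary: s rule: less_induct)
  case less
  note g = less.prems
  have X: "finite X" and ps: "permutation s" and sX: "s ` X \<subseteq> X"
    using g unfolding good_def by auto
  show ?case
  proof (cases "\<forall>x\<in>X. s x = x")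
    case True then show ?thesis using dfc_base[OF g] by simp
  next
    case False
    then obtain u where u: "u \<in> X" "s u \<noteq> u" by blast
    let ?s = "s \<circ> transpose u (s u)"
    have vX: "s u \<in> X" using u sX by blast
    have g': "good ?s a X" using g permutation_transp[OF ps] orb_closed_transp[OF sX u(1) vX]
      unfolding good_def by auto
    have injs: "inj s" using ps permutation_bijective bij_is_inj by blast
    have ssu: "s (s u) \<noteq> s u" using u(2) injs by (metis injD)
    have sub: "{x \<in> X. ?s x \<noteq> x} \<subseteq> {x \<in> X. s x \<noteq> x} - {s u}"
    proof
      fix x assume x: "x \<in> {x \<in> X. ?s x \<noteq> x}"
      show "x \<in> {x \<in> X. s x \<noteq> x} - {s u}"
      proof (cases "x = u")
        case True then show ?thesis using x u by auto
      next
        case False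
        show ?thesis
        proof (cases "x = s u")
          case True then show ?thesis using x False by simp
        next
          case False2: False then show ?thesis using x False by simp
        qed
      qed
    qed
    have "{x \<in> X. ?s x \<noteq> x} \<subset> {x \<in> X. s x \<noteq> x}"
      using sub vX ssu by blast
    then have "card {x \<in> X. ?s x \<noteq> x} < card {x \<in> X. s x \<noteq> x}"
      using X by (simp add: psubset_card_mono)
    then have IH: "0 \<le> dfc ?s a X \<and> even (dfc ?s a X)" using less.hyps g' by blast
    have st: "dfc ?s a X \<le> dfc s a X" "even (dfc s a X - dfc ?s a X)" using split_step[OF g u] by auto
    have "even (dfc s a X)"
    proof -
      have "dfc s a X = (dfc s a X - dfc ?s a X) + dfc ?s a X" by simp
      then show ?thesis using st(2) IH by (metis even_add)
    qed
    then show ?thesis using IH st(1) by simp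
  qed
qed

lemma cmp_restrict:
  assumes Y: "Y \<subseteq> X" "s ` Y \<subseteq> Y" "a ` Y \<subseteq> Y" "s ` (X - Y) \<subseteq> X - Y" "a ` (X - Y) \<subseteq> X - Y"
    and y: "y \<in> Y"
  shows "cmp s a X y = cmp s a Y y" "cmp s a Y y \<subseteq> Y"
proof -
  have A: "z \<in> cmp s a Y y \<and> z \<in> Y" if "z \<in> cmp s a X y" for z
    using that
  proof (rule comp_induct)
    show "y \<in> cmp s a Y y \<and> y \<in> Y" using y by simp
  next
    fix p q assume P: "p \<in> cmp s a Y y \<and> p \<in> Y" and pq: "(p, q) \<in> Gr s a X \<union> (Gr s a X)\<inverse>"
    have "(p, q) \<in> Gr s a Y \<union> (Gr s a Y)\<inverse> \<and> q \<in> Y"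
    proof (rule Gr_cases[OF pq])
      fix w assume w: "w \<in> X" "(p = w \<and> q = s w) \<or> (q = w \<and> p = s w)"
      have wY: "w \<in> Y"
      proof (rule ccontr)
        assume "w \<notin> Y" then have "s w \<in> X - Y" "w \<in> X - Y" using w(1) Y(4) by auto
        then show False using w(2) P by auto
      qed
      then show ?thesis using w(2) Gr_I_s[of w Y p q s a] Y(2) by auto
    next
      fix w assume w: "w \<in> X" "(p = w \<and> q = a w) \<or> (q = w \<and> p = a w)"
      have wY: "w \<in> Y"
      proof (rule ccontr)
        assume "w \<notin> Y" then have "a w \<in> X - Y" "w \<in> X - Y" using w(1) Y(5) by auto
        then show False using w(2) P by auto
      qed
      then show ?thesis using w(2) Gr_I_a[of w Y p q a s] Y(3) by auto
    qed
    then show "q \<in> cmp s a Y y \<and> q \<in> Y" using comp_edge[of p q s a Y y] P by blast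
  qed
  have B: "cmp s a Y y \<subseteq> cmp s a X y"
  proof (rule comp_subI)
    fix p q assume "(p, q) \<in> Gr s a Y"
    then have "(p, q) \<in> Gr s a X" using Y(1) unfolding Gr_def by blast
    then show "q \<in> cmp s a X p" using comp_edge[of p q s a X p] by simp
  qed
  show "cmp s a X y = cmp s a Y y" using A B by blast
  show "cmp s a Y y \<subseteq> Y" using A B by blast
qed

lemma card_image_split:
  assumes fin: "finite X" and K: "K \<subseteq> X"
    and F: "\<And>x. x \<in> K \<Longrightarrow> F x = G x" "\<And>x. x \<in> X - K \<Longrightarrow> F x = H x"
    and Gs: "\<And>x. x \<in> K \<Longrightarrow> G x \<subseteq> K \<and> x \<in> G x"
    and Hs: "\<And>x. x \<in> X - K \<Longrightarrow> H x \<subseteq> X - K \<and> x \<in> H x"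
  shows "card (F ` X) = card (G ` K) + card (H ` (X - K))"
proof -
  have "F ` X = G ` K \<union> H ` (X - K)"
  proof -
    have "X = K \<union> (X - K)" using K by blast
    then have "F ` X = F ` K \<union> F ` (X - K)" by (metis image_Un)
    also have "F ` K = G ` K" using F(1) by (rule image_cong[OF refl])
    also have "F ` (X - K) = H ` (X - K)" using F(2) by (rule image_cong[OF refl])
    finally show ?thesis .
  qed
  moreover have "G ` K \<inter> H ` (X - K) = {}"
  proof (rule ccontr)
    assume "G ` K \<inter> H ` (X - K) \<noteq> {}"
    then obtain x y where xy: "x \<in> K" "y \<in> X - K" "G x = H y" by blast
    then have "y \<in> G x" using Hs[of y] by simp
    then have "y \<in> K" using Gs[OF xy(1)] by blast
    then show False using xy(2) by simp
  qed
  moreover have "finite (G ` K)" "finite (H ` (X - K))" using fin K finite_subset by auto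
  ultimately show ?thesis by (simp add: card_Un_disjoint)
qed

lemma dfc_add:
  assumes g: "good s a X" and K: "K \<subseteq> X" "s ` K \<subseteq> K" "a ` K \<subseteq> K"
  shows "dfc s a X = dfc s a K + dfc s a (X - K)" "good s a K" "good s a (X - K)"
proof -
  have X: "finite X" and ps: "permutation s" and pa: "permutation a" and sX: "s ` X \<subseteq> X"
    and aX: "a ` X \<subseteq> X" and inv: "\<forall>w. a (a w) = w" using g unfolding good_def by auto
  have injs: "inj s" using ps permutation_bijective bij_is_inj by blast
  have inja: "inj a" using pa permutation_bijective bij_is_inj by blast
  have finK: "finite K" using X K(1) finite_subset by blast
  have sX': "s ` X = X" using endo_inj_surj[OF X sX] injs inj_on_subset by blast
  have sK': "s ` K = K" using endo_inj_surj[OF finK K(2)] injs inj_on_subset by blast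
  have aX': "a ` X = X" using endo_inj_surj[OF X aX] inja inj_on_subset by blast
  have aK': "a ` K = K" using endo_inj_surj[OF finK K(3)] inja inj_on_subset by blast
  have sD: "s ` (X - K) \<subseteq> X - K" using image_set_diff[OF injs, of X K] sX' sK' by simp
  have aD: "a ` (X - K) \<subseteq> X - K" using image_set_diff[OF inja, of X K] aX' aK' by simp
  have saK: "(s \<circ> a) ` K \<subseteq> K" using K by (auto simp: image_subset_iff)
  have saD: "(s \<circ> a) ` (X - K) \<subseteq> X - K" using sD aD by (auto simp: image_subset_iff)
  have psa: "permutation (s \<circ> a)" using ps pa by (rule permutation_compose)
  have zadd: "zc f X = zc f K + zc f (X - K)" if pf: "permutation f" and fK: "f ` K \<subseteq> K"
    and fD: "f ` (X - K) \<subseteq> X - K" for f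
    unfolding zc_def
    by (rule card_image_split[OF X K(1), of "orb f" "orb f" "orb f"])
       (use orb_closed[OF fK] orb_closed[OF fD] in auto)
  have KK: "X - (X - K) = K" using K(1) by blast
  have cadd: "cc s a X = cc s a K + cc s a (X - K)"
    unfolding cc_def
  proof (rule card_image_split[OF X K(1)])
    fix x assume "x \<in> K"
    then show "cmp s a X x = cmp s a K x" using cmp_restrict(1)[OF K sD aD] by simp
  next
    fix x assume x: "x \<in> X - K"
    show "cmp s a X x = cmp s a (X - K) x"
      using cmp_restrict(1)[of "X - K" X s a x] sD aD K KK x by auto
  next
    fix x assume x: "x \<in> K"
    show "cmp s a K x \<subseteq> K \<and> x \<in> cmp s a K x"
      using cmp_restrict(2)[OF K sD aD x] by simp
  next
    fix x assume x: "x \<in> X - K"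
    show "cmp s a (X - K) x \<subseteq> X - K \<and> x \<in> cmp s a (X - K) x"
      using cmp_restrict(2)[of "X - K" X s a x] sD aD K KK x by auto
  qed
  have cX: "card X = card K + card (X - K)"
    using X K(1) by (metis card_Diff_subset finK card_mono le_add_diff_inverse)
  show "dfc s a X = dfc s a K + dfc s a (X - K)"
    unfolding dfc_def using zadd[OF ps K(2) sD] zadd[OF pa K(3) aD] zadd[OF psa saK saD] cadd cX
    by simp
  show "good s a K" using g finK K unfolding good_def by auto
  show "good s a (X - K)" using g sD aD unfolding good_def by auto
qed


abbreviation DD :: "nat set \<Rightarrow> (nat \<times> nat \<times> bool) set" where
  "DD Q \<equiv> darts {0, 1::nat} Q"

definition sg0 :: "nat set \<Rightarrow> (nat \<times> nat \<times> bool \<Rightarrow> nat \<times> nat \<times> bool) \<Rightarrow> nat \<times> nat \<times> bool \<Rightarrow> nat \<times> nat \<times> bool" where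
  "sg0 Q sigma = (\<lambda>d. if d \<in> DD Q then sigma d else d)"

definition al0 :: "nat set \<Rightarrow> nat \<times> nat \<times> bool \<Rightarrow> nat \<times> nat \<times> bool" where
  "al0 Q = (\<lambda>d. if d \<in> DD Q then dart_rev d else d)"

lemma darts_mem[simp]: "(q, a, b) \<in> darts A Q \<longleftrightarrow> q \<in> Q \<and> a \<in> A"
  unfolding darts_def by simp

lemma finite_DD: "finite Q \<Longrightarrow> finite (DD Q)"
  unfolding darts_def by simp

lemma card_DD: "finite Q \<Longrightarrow> card (DD Q) = 4 * card Q"
  unfolding darts_def by (simp add: card_cartesian_product)

lemma rev_DD: "d \<in> darts A Q \<Longrightarrow> dart_rev d \<in> darts A Q"
  by (cases d) auto

lemma rev_rev[simp]: "dart_rev (dart_rev d) = d"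
  by (cases d) auto

lemma vtx_DD:
  assumes "is_dfa {0, 1} Q q0 F delta" "d \<in> DD Q"
  shows "dart_vertex delta d \<in> Q"
  using assms unfolding is_dfa_def by (cases d) auto

lemma rot_facts:
  assumes "rotation_system {0,1} Q delta sigma"
  shows "bij_betw sigma (DD Q) (DD Q)" "\<And>d. d \<in> DD Q \<Longrightarrow> dart_vertex delta (sigma d) = dart_vertex delta d"
    "\<And>d e. d \<in> DD Q \<Longrightarrow> e \<in> DD Q \<Longrightarrow> dart_vertex delta d = dart_vertex delta e \<Longrightarrow> \<exists>n. (sigma ^^ n) d = e"
  using assms unfolding rotation_system_def by auto

lemma sg0_funpow:
  assumes "rotation_system {0,1} Q delta sigma" "d \<in> DD Q"
  shows "(sg0 Q sigma ^^ n) d = (sigma ^^ n) d \<and> (sigma ^^ n) d \<in> DD Q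
         \<and> dart_vertex delta ((sigma ^^ n) d) = dart_vertex delta d"
proof (induction n)
  case 0 then show ?case using assms by simp
next
  case (Suc n)
  have b: "bij_betw sigma (DD Q) (DD Q)" using rot_facts(1)[OF assms(1)] .
  have "sigma ((sigma ^^ n) d) \<in> DD Q" using Suc b bij_betwE by blast
  then show ?case using Suc rot_facts(2)[OF assms(1), of "(sigma ^^ n) d"] by (simp add: sg0_def)
qed

lemma good_bridge:
  assumes dfa: "is_dfa {0, 1} Q q0 F delta" and rot: "rotation_system {0,1} Q delta sigma"
  shows "good (sg0 Q sigma) (al0 Q) (DD Q)"
proof -
  have Q: "finite Q" using dfa unfolding is_dfa_def by simp
  have fD: "finite (DD Q)" using finite_DD[OF Q] .
  have b: "bij_betw sigma (DD Q) (DD Q)" using rot_facts(1)[OF rot] .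
  have b0: "bij_betw (sg0 Q sigma) (DD Q) (DD Q)"
    using b by (rule bij_betw_cong[THEN iffD1, rotated]) (simp add: sg0_def)
  have p1: "sg0 Q sigma permutes DD Q" by (rule bij_imp_permutes[OF b0]) (simp add: sg0_def)
  have ba: "bij_betw (al0 Q) (DD Q) (DD Q)"
  proof (rule bij_betw_byWitness[where f' = "al0 Q"])
    show "\<forall>x\<in>DD Q. al0 Q (al0 Q x) = x" by (simp add: al0_def rev_DD)
    show "\<forall>x\<in>DD Q. al0 Q (al0 Q x) = x" by (simp add: al0_def rev_DD)
    show "al0 Q ` DD Q \<subseteq> DD Q" by (auto simp: al0_def rev_DD)
    show "al0 Q ` DD Q \<subseteq> DD Q" by (auto simp: al0_def rev_DD)
  qed
  have p2: "al0 Q permutes DD Q" by (rule bij_imp_permutes[OF ba]) (simp add: al0_def)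
  show ?thesis unfolding good_def
  proof (intro conjI)
    show "finite (DD Q)" using fD .
    show "permutation (sg0 Q sigma)" using p1 fD permutation_permutes by blast
    show "permutation (al0 Q)" using p2 fD permutation_permutes by blast
    show "sg0 Q sigma ` DD Q \<subseteq> DD Q" using b0 bij_betw_imp_surj_on by blast
    show "al0 Q ` DD Q \<subseteq> DD Q" using ba bij_betw_imp_surj_on by blast
    show "\<forall>w. al0 Q (al0 Q w) = w" by (simp add: al0_def rev_DD)
  qed
qed

lemma orb_sg0:
  assumes dfa: "is_dfa {0, 1} Q q0 F delta" and rot: "rotation_system {0,1} Q delta sigma"
    and d: "d \<in> DD Q"
  shows "orb (sg0 Q sigma) d = {e \<in> DD Q. dart_vertex delta e = dart_vertex delta d}"
proof
  show "orb (sg0 Q sigma) d \<subseteq> {e \<in> DD Q. dart_vertex delta e = dart_vertex delta d}"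
    unfolding orb_def using sg0_funpow[OF rot d] by auto
  show "{e \<in> DD Q. dart_vertex delta e = dart_vertex delta d} \<subseteq> orb (sg0 Q sigma) d"
  proof
    fix e assume e: "e \<in> {e \<in> DD Q. dart_vertex delta e = dart_vertex delta d}"
    then obtain n where "(sigma ^^ n) d = e" using rot_facts(3)[OF rot d, of e] by auto
    then have "(sg0 Q sigma ^^ n) d = e" using sg0_funpow[OF rot d] by simp
    then show "e \<in> orb (sg0 Q sigma) d" using funpow_in_orb[of n "sg0 Q sigma" d] by simp
  qed
qed

lemma al0_funpow:
  assumes d: "d \<in> DD Q"
  shows "(al0 Q ^^ n) d = (if even n then d else dart_rev d)"
proof (induction n)
  case 0 then show ?case by simp
next
  case (Suc n) then show ?case using d rev_DD[OF d] by (auto simp: al0_def)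
qed

lemma orb_al0:
  assumes d: "d \<in> DD Q"
  shows "orb (al0 Q) d = {d, dart_rev d}"
proof
  show "orb (al0 Q) d \<subseteq> {d, dart_rev d}" unfolding orb_def using al0_funpow[OF d] by auto
  have "(al0 Q ^^ 1) d = dart_rev d" using al0_funpow[OF d, of 1] by simp
  then have "dart_rev d \<in> orb (al0 Q) d" using funpow_in_orb[of 1 "al0 Q" d] by simp
  then show "{d, dart_rev d} \<subseteq> orb (al0 Q) d" by simp
qed

lemma phi_funpow:
  assumes rot: "rotation_system {0,1} Q delta sigma" and d: "d \<in> DD Q"
  shows "((sg0 Q sigma \<circ> al0 Q) ^^ n) d = ((sigma \<circ> dart_rev) ^^ n) d \<and> ((sigma \<circ> dart_rev) ^^ n) d \<in> DD Q"
proof (induction n)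
  case 0 then show ?case using d by simp
next
  case (Suc n)
  let ?y = "((sigma \<circ> dart_rev) ^^ n) d"
  have b: "bij_betw sigma (DD Q) (DD Q)" using rot_facts(1)[OF rot] .
  have r: "dart_rev ?y \<in> DD Q" using conjunct2[OF Suc.IH] rev_DD by blast
  have sr: "sigma (dart_rev ?y) \<in> DD Q" using r b bij_betwE by blast
  have IH1: "((sg0 Q sigma \<circ> al0 Q) ^^ n) d = ?y" using Suc.IH by (rule conjunct1)
  have yD: "?y \<in> DD Q" using Suc.IH by (rule conjunct2)
  have "((sg0 Q sigma \<circ> al0 Q) ^^ Suc n) d = sg0 Q sigma (al0 Q (((sg0 Q sigma \<circ> al0 Q) ^^ n) d))"
    by (simp only: funpow.simps o_apply)
  also have "\<dots> = sigma (dart_rev ?y)" unfolding IH1 using yD r by (simp add: sg0_def al0_def)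
  also have e2: "\<dots> = ((sigma \<circ> dart_rev) ^^ Suc n) d" by (simp only: funpow.simps o_apply)
  finally have eq: "((sg0 Q sigma \<circ> al0 Q) ^^ Suc n) d = ((sigma \<circ> dart_rev) ^^ Suc n) d" .
  have mem: "((sigma \<circ> dart_rev) ^^ Suc n) d \<in> DD Q" using sr unfolding e2[symmetric] .
  show ?case using eq mem by (rule conjI)
qed

lemma orb_phi:
  assumes rot: "rotation_system {0,1} Q delta sigma" and d: "d \<in> DD Q"
  shows "orb (sg0 Q sigma \<circ> al0 Q) d = {((sigma \<circ> dart_rev) ^^ n) d | n. True}"
  unfolding orb_def using phi_funpow[OF rot d] by simp


lemma card_image_rel:
  assumes "\<And>x y. x \<in> A \<Longrightarrow> y \<in> A \<Longrightarrow> f x = f y \<longleftrightarrow> g x = g y"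
  shows "card (f ` A) = card (g ` A)"
proof -
  define h where "h = (\<lambda>S. g (SOME x. x \<in> A \<and> f x = S))"
  have hf: "h (f x) = g x" if x: "x \<in> A" for x
  proof -
    have ex: "\<exists>y. y \<in> A \<and> f y = f x" using x by blast
    have "(SOME y. y \<in> A \<and> f y = f x) \<in> A \<and> f (SOME y. y \<in> A \<and> f y = f x) = f x"
      using someI_ex[OF ex] .
    then show ?thesis unfolding h_def using assms x by blast
  qed
  have "g ` A = h ` f ` A" using hf by (auto simp: image_image)
  moreover have "inj_on h (f ` A)"
  proof (rule inj_onI)
    fix S T assume "S \<in> f ` A" "T \<in> f ` A" "h S = h T"
    then obtain x y where "x \<in> A" "y \<in> A" "S = f x" "T = f y" "g x = g y" using hf by auto
    then show "S = T" using assms by simp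
  qed
  ultimately show ?thesis by (simp add: card_image)
qed

context
  fixes Q :: "nat set" and q0 :: nat and F :: "nat set" and delta :: "nat \<Rightarrow> nat \<Rightarrow> nat"
    and sigma :: "nat \<times> nat \<times> bool \<Rightarrow> nat \<times> nat \<times> bool"
  assumes dfa: "is_dfa {0, 1::nat} Q q0 F delta" and rot: "rotation_system {0,1} Q delta sigma"
begin

lemma finQ: "finite Q" using dfa unfolding is_dfa_def by simp

lemma delta_Q: "q \<in> Q \<Longrightarrow> a \<in> {0,1} \<Longrightarrow> delta q a \<in> Q"
  using dfa unfolding is_dfa_def by blast

lemma zc_sg0: "zc (sg0 Q sigma) (DD Q) = card Q"
proof -
  let ?V = "\<lambda>q. {e \<in> DD Q. dart_vertex delta e = q}"
  have "orb (sg0 Q sigma) ` DD Q = ?V ` Q"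
  proof (intro set_eqI iffI)
    fix S assume "S \<in> orb (sg0 Q sigma) ` DD Q"
    then obtain d where d: "d \<in> DD Q" "S = orb (sg0 Q sigma) d" by blast
    then have "S = ?V (dart_vertex delta d)" using orb_sg0[OF dfa rot d(1)] by simp
    moreover have "dart_vertex delta d \<in> Q" using vtx_DD[OF dfa d(1)] .
    ultimately show "S \<in> ?V ` Q" by blast
  next
    fix S assume "S \<in> ?V ` Q"
    then obtain q where q: "q \<in> Q" "S = ?V q" by blast
    have d: "(q, 0, True) \<in> DD Q" using q by simp
    have "S = orb (sg0 Q sigma) (q, 0, True)" using orb_sg0[OF dfa rot d] q by simp
    then show "S \<in> orb (sg0 Q sigma) ` DD Q" using d by blast
  qed
  moreover have "inj_on ?V Q"
  proof (rule inj_onI)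
    fix q q' assume q: "q \<in> Q" "q' \<in> Q" "?V q = ?V q'"
    have h: "(q, 0, True) \<in> ?V q" using q(1) by simp
    have "(q, 0, True) \<in> ?V q'" using h unfolding q(3) .
    then show "q = q'" by simp
  qed
  ultimately show ?thesis unfolding zc_def by (simp add: card_image)
qed

lemma zc_al0: "zc (al0 Q) (DD Q) = 2 * card Q"
proof -
  let ?P = "\<lambda>(q::nat, a::nat). {(q, a, True), (q, a, False)}"
  have "orb (al0 Q) ` DD Q = ?P ` (Q \<times> {0,1::nat})"
  proof (intro set_eqI iffI)
    fix S assume "S \<in> orb (al0 Q) ` DD Q"
    then obtain d where d: "d \<in> DD Q" "S = orb (al0 Q) d" by blast
    obtain q a b where dd: "d = (q, a, b)" by (cases d) auto
    have "S = ?P (q, a)" using orb_al0[OF d(1)] d dd by (cases b) auto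
    then show "S \<in> ?P ` (Q \<times> {0,1::nat})" using d dd by auto
  next
    fix S assume "S \<in> ?P ` (Q \<times> {0,1::nat})"
    then obtain q a where qa: "q \<in> Q" "a \<in> {0,1::nat}" "S = ?P (q, a)" by blast
    have d: "(q, a, True) \<in> DD Q" using qa by simp
    have "S = orb (al0 Q) (q, a, True)" using orb_al0[OF d] qa by auto
    then show "S \<in> orb (al0 Q) ` DD Q" using d by blast
  qed
  moreover have "inj_on ?P (Q \<times> {0,1::nat})"
  proof (rule inj_onI)
    fix x y assume xy: "x \<in> Q \<times> {0,1::nat}" "y \<in> Q \<times> {0,1::nat}" "?P x = ?P y"
    obtain q a where x: "x = (q, a)" by (cases x) auto
    obtain q' a' where y: "y = (q', a')" by (cases y) auto
    have "(q, a, True) \<in> ?P x" using x by simp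
    then have "(q, a, True) \<in> ?P y" using xy(3) by simp
    then show "x = y" using x y by simp
  qed
  ultimately have "zc (al0 Q) (DD Q) = card (Q \<times> {0,1::nat})" unfolding zc_def by (simp add: card_image)
  then show ?thesis using finQ by (simp add: card_cartesian_product)
qed

lemma zc_phi: "zc (sg0 Q sigma \<circ> al0 Q) (DD Q) = num_faces {0,1} Q delta sigma"
proof -
  have iso: "{q \<in> Q. \<forall>d\<in>darts {0,1} Q. dart_vertex delta d \<noteq> q} = {}"
  proof (rule equals0I)
    fix q assume "q \<in> {q \<in> Q. \<forall>d\<in>darts {0,1} Q. dart_vertex delta d \<noteq> q}"
    then have "q \<in> Q" "\<forall>d\<in>darts {0,1::nat} Q. dart_vertex delta d \<noteq> q" by auto
    moreover have "(q, 0, True) \<in> darts {0,1::nat} Q" using \<open>q \<in> Q\<close> by simp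
    ultimately show False by fastforce
  qed
  have "orb (sg0 Q sigma \<circ> al0 Q) ` DD Q = (\<lambda>d. {((sigma \<circ> dart_rev) ^^ n) d | n. True}) ` DD Q"
    using orb_phi[OF rot] by (rule image_cong[OF refl])
  also have "\<dots> = {{((sigma \<circ> dart_rev) ^^ n) d | n. True} | d. d \<in> DD Q}" by blast
  finally have "orb (sg0 Q sigma \<circ> al0 Q) ` DD Q = {{((sigma \<circ> dart_rev) ^^ n) d | n. True} | d. d \<in> DD Q}" .
  then show ?thesis unfolding zc_def num_faces_def iso by simp
qed

lemma sg0_DD: "sg0 Q sigma ` DD Q \<subseteq> DD Q"
  using good_bridge[OF dfa rot] unfolding good_def by blast

lemma sameV:
  assumes "d \<in> DD Q" "e \<in> DD Q" "dart_vertex delta d = dart_vertex delta e"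
    "d \<in> cmp (sg0 Q sigma) (al0 Q) (DD Q) x"
  shows "e \<in> cmp (sg0 Q sigma) (al0 Q) (DD Q) x"
proof -
  have "e \<in> orb (sg0 Q sigma) d" using orb_sg0[OF dfa rot assms(1)] assms(2,3) by simp
  moreover have "orb (sg0 Q sigma) d \<subseteq> cmp (sg0 Q sigma) (al0 Q) (DD Q) d"
    by (rule orb_sub_comp_s[OF sg0_DD assms(1)])
  ultimately have "e \<in> cmp (sg0 Q sigma) (al0 Q) (DD Q) d" by blast
  then show ?thesis by (rule comp_trans[OF assms(4)])
qed

abbreviation "RR \<equiv> (graph_edges {0,1} Q delta \<union> (graph_edges {0,1} Q delta)\<inverse>)\<^sup>*"
abbreviation "CC \<equiv> cmp (sg0 Q sigma) (al0 Q) (DD Q)"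

lemma keyA:
  assumes q: "q \<in> Q" and r: "(q, q') \<in> RR"
  shows "(q', 0, True) \<in> CC (q, 0, True) \<and> q' \<in> Q"
  using r
proof (induction rule: rtrancl_induct)
  case base then show ?case using q by simp
next
  case (step y z)
  then have IH: "(y, 0, True) \<in> CC (q, 0, True)" "y \<in> Q" by auto
  from step(2) consider a where "a \<in> {0,1}" "y \<in> Q" "z = delta y a"
    | a where "a \<in> {0,1}" "z \<in> Q" "y = delta z a"
    unfolding graph_edges_def by blast
  then show ?case
  proof cases
    case 1
    have zQ: "z \<in> Q" using delta_Q 1 by simp
    have "(y, a, True) \<in> CC (q, 0, True)"
      by (rule sameV[OF _ _ _ IH(1)]) (use 1 in auto)
    then have "al0 Q (y, a, True) \<in> CC (q, 0, True)"
      using comp_step_a[of "(y, a, True)" "DD Q" "sg0 Q sigma" "al0 Q"] 1 by simp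
    then have "(y, a, False) \<in> CC (q, 0, True)" using 1 by (simp add: al0_def)
    then have "(z, 0, True) \<in> CC (q, 0, True)"
      by (rule sameV[rotated 3]) (use 1 zQ in auto)
    then show ?thesis using zQ by simp
  next
    case 2
    have "(z, a, False) \<in> CC (q, 0, True)"
      by (rule sameV[OF _ _ _ IH(1)]) (use 2 IH(2) in auto)
    then have "al0 Q (z, a, False) \<in> CC (q, 0, True)"
      using comp_step_a[of "(z, a, False)" "DD Q" "sg0 Q sigma" "al0 Q"] 2 by simp
    then have "(z, a, True) \<in> CC (q, 0, True)" using 2 by (simp add: al0_def)
    then have "(z, 0, True) \<in> CC (q, 0, True)"
      by (rule sameV[rotated 3]) (use 2 in auto)
    then show ?thesis using 2 by simp
  qed
qed

lemma edge_R:
  assumes "w \<in> DD Q"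
  shows "(dart_vertex delta w, dart_vertex delta (dart_rev w)) \<in> RR"
proof -
  obtain q a b where w: "w = (q, a, b)" by (cases w) auto
  have e: "(q, delta q a) \<in> graph_edges {0,1} Q delta" using assms w unfolding graph_edges_def by auto
  show ?thesis
  proof (cases b)
    case True then show ?thesis using w e by auto
  next
    case False then show ?thesis using w e by auto
  qed
qed

lemma R_sym: "(x, y) \<in> RR \<Longrightarrow> (y, x) \<in> RR"
proof -
  let ?E = "graph_edges {0,1} Q delta"
  assume "(x, y) \<in> RR"
  then have "(y, x) \<in> ((?E \<union> ?E\<inverse>)\<inverse>)\<^sup>*" by (rule rtrancl_converseI)
  then show "(y, x) \<in> RR" by (simp add: converse_Un Un_commute)
qed

lemma keyB:
  assumes q: "q \<in> Q" and y: "y \<in> CC (q, 0, True)"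
  shows "y \<in> DD Q \<and> (q, dart_vertex delta y) \<in> RR"
  using y
proof (rule comp_induct)
  show "(q, 0, True) \<in> DD Q \<and> (q, dart_vertex delta (q, 0, True)) \<in> RR" using q by simp
next
  fix p z assume P: "p \<in> DD Q \<and> (q, dart_vertex delta p) \<in> RR"
    and pz: "(p, z) \<in> Gr (sg0 Q sigma) (al0 Q) (DD Q) \<union> (Gr (sg0 Q sigma) (al0 Q) (DD Q))\<inverse>"
  have b: "bij_betw sigma (DD Q) (DD Q)" using rot_facts(1)[OF rot] .
  show "z \<in> DD Q \<and> (q, dart_vertex delta z) \<in> RR"
  proof (rule Gr_cases[OF pz])
    fix w assume w: "w \<in> DD Q" "(p = w \<and> z = sg0 Q sigma w) \<or> (z = w \<and> p = sg0 Q sigma w)"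
    have sw: "sg0 Q sigma w = sigma w" "sigma w \<in> DD Q" using w(1) b bij_betwE by (auto simp: sg0_def)
    have "dart_vertex delta (sigma w) = dart_vertex delta w" using rot_facts(2)[OF rot w(1)] .
    then have "dart_vertex delta z = dart_vertex delta p" "z \<in> DD Q" using w sw by auto
    then show ?thesis using P by simp
  next
    fix w assume w: "w \<in> DD Q" "(p = w \<and> z = al0 Q w) \<or> (z = w \<and> p = al0 Q w)"
    have aw: "al0 Q w = dart_rev w" "dart_rev w \<in> DD Q" using w(1) rev_DD[OF w(1)] by (auto simp: al0_def)
    have e1: "(dart_vertex delta w, dart_vertex delta (dart_rev w)) \<in> RR" using edge_R[OF w(1)] .
    have e2: "(dart_vertex delta (dart_rev w), dart_vertex delta w) \<in> RR" using R_sym[OF e1] .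
    from w(2) show ?thesis
    proof
      assume "p = w \<and> z = al0 Q w"
      then show ?thesis using P aw e1 rtrancl_trans by metis
    next
      assume "z = w \<and> p = al0 Q w"
      then show ?thesis using P aw e2 w(1) rtrancl_trans by metis
    qed
  qed
qed

lemma cc_bridge: "cc (sg0 Q sigma) (al0 Q) (DD Q) = num_components {0,1} Q delta"
proof -
  have g: "good (sg0 Q sigma) (al0 Q) (DD Q)" using good_bridge[OF dfa rot] .
  have i1: "CC ` DD Q = (\<lambda>q. CC (q, 0, True)) ` Q"
  proof (intro set_eqI iffI)
    fix S assume "S \<in> CC ` DD Q"
    then obtain d where d: "d \<in> DD Q" "S = CC d" by blast
    let ?q = "dart_vertex delta d"
    have qQ: "?q \<in> Q" using vtx_DD[OF dfa d(1)] .
    have "(?q, 0, True) \<in> CC d"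
      by (rule sameV[of d]) (use d qQ in auto)
    then have "CC (?q, 0, True) = CC d" by (rule comp_eq)
    then show "S \<in> (\<lambda>q. CC (q, 0, True)) ` Q" using d qQ by auto
  next
    fix S assume "S \<in> (\<lambda>q. CC (q, 0, True)) ` Q"
    then obtain q where "q \<in> Q" "S = CC (q, 0, True)" by blast
    then show "S \<in> CC ` DD Q" by auto
  qed
  have i2: "Q // RR = (\<lambda>q. RR `` {q}) ` Q" unfolding quotient_def by auto
  have rel: "CC (x, 0, True) = CC (y, 0, True) \<longleftrightarrow> RR `` {x} = RR `` {y}" if xy: "x \<in> Q" "y \<in> Q" for x y
  proof -
    have "CC (x, 0, True) = CC (y, 0, True) \<longleftrightarrow> (y, 0, True) \<in> CC (x, 0, True)"
      using comp_eq[of "(y, 0, True)" "sg0 Q sigma" "al0 Q" "DD Q" "(x, 0, True)"]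
        self_in_comp[of "(y, 0, True)" "sg0 Q sigma" "al0 Q" "DD Q"] by blast
    also have "\<dots> \<longleftrightarrow> (x, y) \<in> RR"
      using keyA[OF xy(1), of y] keyB[OF xy(1), of "(y, 0, True)"] by auto
    also have "\<dots> \<longleftrightarrow> RR `` {x} = RR `` {y}"
    proof
      assume r: "(x, y) \<in> RR"
      show "RR `` {x} = RR `` {y}"
        using r R_sym[OF r] rtrancl_trans by (metis (no_types, lifting) Image_singleton_iff subsetI subset_antisym)
    next
      assume eq: "RR `` {x} = RR `` {y}"
      have "y \<in> RR `` {x}" using eq by simp
      then show "(x, y) \<in> RR" by simp
    qed
    finally show ?thesis .
  qed
  have "cc (sg0 Q sigma) (al0 Q) (DD Q) = card ((\<lambda>q. CC (q, 0, True)) ` Q)" unfolding cc_def i1 ..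
  also have "\<dots> = card ((\<lambda>q. RR `` {q}) ` Q)" by (rule card_image_rel) (use rel in simp)
  also have "\<dots> = num_components {0,1} Q delta" unfolding num_components_def i2 ..
  finally show ?thesis .
qed

lemma euler_bridge:
  "int (card Q) - int (card Q * card {0,1::nat}) + int (num_faces {0,1} Q delta sigma)
     = 2 * int (num_components {0,1} Q delta) - dfc (sg0 Q sigma) (al0 Q) (DD Q)"
  unfolding dfc_def using zc_sg0 zc_al0 zc_phi cc_bridge card_DD[OF finQ] by simp

end


definition Lv :: "nat set \<Rightarrow> (nat \<Rightarrow> nat \<Rightarrow> nat) \<Rightarrow> nat \<Rightarrow> (nat \<times> nat \<times> bool) list" where
  "Lv Q delta q = (SOME xs. distinct xs \<and> set xs = {d \<in> DD Q. dart_vertex delta d = q})"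

definition rsig :: "nat set \<Rightarrow> (nat \<Rightarrow> nat \<Rightarrow> nat) \<Rightarrow> nat \<times> nat \<times> bool \<Rightarrow> nat \<times> nat \<times> bool" where
  "rsig Q delta = (\<lambda>d. cycle_of_list (Lv Q delta (dart_vertex delta d)) d)"

lemma Lv_props:
  assumes "finite Q"
  shows "distinct (Lv Q delta q) \<and> set (Lv Q delta q) = {d \<in> DD Q. dart_vertex delta d = q}"
proof -
  have "finite {d \<in> DD Q. dart_vertex delta d = q}" using finite_DD[OF assms] by simp
  then have "\<exists>xs. distinct xs \<and> set xs = {d \<in> DD Q. dart_vertex delta d = q}"
    using finite_distinct_list by metis
  then show ?thesis unfolding Lv_def by (rule someI_ex)
qed

lemma rsig_rot:
  assumes dfa: "is_dfa {0, 1::nat} Q q0 F delta"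
  shows "rotation_system {0,1} Q delta (rsig Q delta)"
proof -
  have Q: "finite Q" using dfa unfolding is_dfa_def by simp
  let ?c = "\<lambda>q. cycle_of_list (Lv Q delta q)"
  let ?S = "\<lambda>q. {d \<in> DD Q. dart_vertex delta d = q}"
  have cp: "?c q permutes ?S q" for q using cycle_permutes[of "Lv Q delta q"] Lv_props[OF Q] by simp
  have mem: "rsig Q delta d \<in> DD Q \<and> dart_vertex delta (rsig Q delta d) = dart_vertex delta d"
    if d: "d \<in> DD Q" for d
  proof -
    have "d \<in> ?S (dart_vertex delta d)" using d by simp
    then have "?c (dart_vertex delta d) d \<in> ?S (dart_vertex delta d)"
      using permutes_in_image[OF cp] by blast
    then show ?thesis unfolding rsig_def by simp
  qed
  have inj: "inj_on (rsig Q delta) (DD Q)"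
  proof (rule inj_onI)
    fix d e assume de: "d \<in> DD Q" "e \<in> DD Q" "rsig Q delta d = rsig Q delta e"
    then have v: "dart_vertex delta d = dart_vertex delta e" using mem by metis
    then have "?c (dart_vertex delta d) d = ?c (dart_vertex delta d) e" using de(3) unfolding rsig_def by simp
    then show "d = e" using permutes_inj[OF cp] by (metis injD)
  qed
  have img: "rsig Q delta ` DD Q = DD Q"
    using endo_inj_surj[OF finite_DD[OF Q] _ inj] mem by blast
  have bij: "bij_betw (rsig Q delta) (DD Q) (DD Q)" using inj img unfolding bij_betw_def by simp
  have trans: "\<exists>n. (rsig Q delta ^^ n) d = e"
    if de: "d \<in> DD Q" "e \<in> DD Q" "dart_vertex delta d = dart_vertex delta e" for d e
  proof -
    let ?q = "dart_vertex delta d"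
    let ?cs = "Lv Q delta ?q"
    have cs: "distinct ?cs" "set ?cs = ?S ?q" using Lv_props[OF Q] by auto
    obtain i where i: "i < length ?cs" "?cs ! i = d" using de cs(2) by (metis (mono_tags, lifting) in_set_conv_nth mem_Collect_eq)
    obtain j where j: "j < length ?cs" "?cs ! j = e" using de cs(2) by (metis (mono_tags, lifting) in_set_conv_nth mem_Collect_eq)
    define n where "n = j + length ?cs - i"
    have "map (?c ?q ^^ n) ?cs = rotate n ?cs" using cyclic_rotation[OF cs(1)] .
    then have "(?c ?q ^^ n) (?cs ! i) = rotate n ?cs ! i" by (metis i(1) length_map nth_map)
    also have "\<dots> = ?cs ! ((i + n) mod length ?cs)" using nth_rotate[OF i(1), of n] by (simp add: add.commute)
    also have "(i + n) mod length ?cs = j" unfolding n_def using i j by simp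
    finally have c: "(?c ?q ^^ n) d = e" using i j by simp
    have agree: "(rsig Q delta ^^ k) d = (?c ?q ^^ k) d \<and> (?c ?q ^^ k) d \<in> ?S ?q" for k
    proof (induction k)
      case 0 then show ?case using de by simp
    next
      case (Suc k)
      let ?y = "(?c ?q ^^ k) d"
      have y: "?y \<in> ?S ?q" using Suc by simp
      have "?c ?q ?y \<in> ?S ?q" using permutes_in_image[OF cp] y by blast
      moreover have "rsig Q delta ?y = ?c ?q ?y" unfolding rsig_def using y by simp
      ultimately show ?case using Suc by simp
    qed
    show ?thesis using agree[of n] c by metis
  qed
  show ?thesis unfolding rotation_system_def using bij mem trans by blast
qed

lemma genus_P:
  assumes dfa: "is_dfa {0, 1::nat} Q q0 F delta"
  shows "(\<exists>sigma. rotation_system {0,1} Q delta sigma \<and>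
     int (card Q) - int (card Q * card {0,1::nat}) + int (num_faces {0,1} Q delta sigma)
       = 2 * int (num_components {0,1} Q delta) - 2 * int g)
     \<longleftrightarrow> (\<exists>sigma. rotation_system {0,1} Q delta sigma \<and> dfc (sg0 Q sigma) (al0 Q) (DD Q) = 2 * int g)"
  using euler_bridge[OF dfa] by auto

lemma dfa_genus_eq:
  assumes dfa: "is_dfa {0, 1::nat} Q q0 F delta"
  shows "dfa_genus {0,1} Q delta = (LEAST g. \<exists>sigma. rotation_system {0,1} Q delta sigma \<and> dfc (sg0 Q sigma) (al0 Q) (DD Q) = 2 * int g)"
  unfolding dfa_genus_def using genus_P[OF dfa] by simp

lemma dfa_genus_ge1:
  assumes dfa: "is_dfa {0, 1::nat} Q q0 F delta"
    and nz: "\<And>sigma. rotation_system {0,1} Q delta sigma \<Longrightarrow> dfc (sg0 Q sigma) (al0 Q) (DD Q) \<noteq> 0"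
  shows "dfa_genus {0,1} Q delta \<ge> 1"
proof -
  let ?P = "\<lambda>g. \<exists>sigma. rotation_system {0,1} Q delta sigma \<and> dfc (sg0 Q sigma) (al0 Q) (DD Q) = 2 * int g"
  have rot: "rotation_system {0,1} Q delta (rsig Q delta)" using rsig_rot[OF dfa] .
  have "0 \<le> dfc (sg0 Q (rsig Q delta)) (al0 Q) (DD Q) \<and> even (dfc (sg0 Q (rsig Q delta)) (al0 Q) (DD Q))"
    using dfc_nonneg[OF good_bridge[OF dfa rot]] .
  then obtain k where k: "dfc (sg0 Q (rsig Q delta)) (al0 Q) (DD Q) = 2 * k" "k \<ge> 0" by (auto elim!: evenE)
  have "?P (nat k)" using k rot by auto
  then have "?P (Least ?P)" by (rule LeastI)
  then obtain sigma where s: "rotation_system {0,1} Q delta sigma" "dfc (sg0 Q sigma) (al0 Q) (DD Q) = 2 * int (Least ?P)" by blast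
  have "Least ?P \<noteq> 0" using nz[OF s(1)] s(2) by auto
  then show ?thesis unfolding dfa_genus_eq[OF dfa] by simp
qed

lemma dfa_genus_le1:
  assumes dfa: "is_dfa {0, 1::nat} Q q0 F delta"
    and ex: "rotation_system {0,1} Q delta sigma" "dfc (sg0 Q sigma) (al0 Q) (DD Q) = 2"
  shows "dfa_genus {0,1} Q delta \<le> 1"
  unfolding dfa_genus_eq[OF dfa] by (rule Least_le) (use ex in auto)


lemma good_split:
  assumes g: "good s a X" and u: "u \<in> X"
  shows "good (s \<circ> transpose u (s u)) a X"
proof -
  have ps: "permutation s" and sX: "s ` X \<subseteq> X" using g unfolding good_def by auto
  have vX: "s u \<in> X" using u sX by blast
  show ?thesis using g permutation_transp[OF ps] orb_closed_transp[OF sX u vX]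
    unfolding good_def by auto
qed

lemma extract_core:
  assumes "good s a X" "K \<subseteq> X" "a ` K \<subseteq> K"
    "\<forall>w\<in>X. vt (s w) = vt w"
    "\<forall>k1\<in>K. \<forall>k2\<in>K. vt k1 = vt k2 \<longrightarrow> k2 \<in> orb s k1"
  shows "\<exists>s'. good s' a X \<and> dfc s' a X \<le> dfc s a X \<and> s' ` K \<subseteq> K \<and> (\<forall>w\<in>X. vt (s' w) = vt w)
           \<and> (\<forall>k1\<in>K. \<forall>k2\<in>K. vt k1 = vt k2 \<longrightarrow> k2 \<in> orb s' k1)"
  using assms
proof (induction "card {w \<in> X - K. s w \<noteq> w}" arbitrary: s rule: less_induct)
  case less
  note g = less.prems(1) and K = less.prems(2,3) and I2 = less.prems(4) and I3 = less.prems(5)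
  have X: "finite X" and ps: "permutation s" and sX: "s ` X \<subseteq> X"
    using g unfolding good_def by auto
  have injs: "inj s" using ps permutation_bijective bij_is_inj by blast
  show ?case
  proof (cases "s ` K \<subseteq> K")
    case True
    then show ?thesis using g I2 I3 by blast
  next
    case False
    then obtain k where k: "k \<in> K" "s k \<notin> K" by blast
    let ?x = "s k"
    let ?s = "s \<circ> transpose k ?x"
    have kX: "k \<in> X" using k K by blast
    have xX: "?x \<in> X" using kX sX by blast
    have kx: "?x \<noteq> k" using k by auto
    have g': "good ?s a X" using good_split[OF g kX] .
    have ps': "permutation ?s" using g' unfolding good_def by simp
    have st: "dfc ?s a X \<le> dfc s a X" using split_step(1)[OF g kX kx] .
    have sxx: "?s ?x = ?x" by simp
    have I2': "\<forall>w\<in>X. vt (?s w) = vt w"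
    proof
      fix w assume w: "w \<in> X"
      show "vt (?s w) = vt w"
      proof (cases "w = k")
        case True then show ?thesis using I2 xX kX by simp
      next
        case False
        then show ?thesis using I2 w by (cases "w = ?x") auto
      qed
    qed
    have I3': "\<forall>k1\<in>K. \<forall>k2\<in>K. vt k1 = vt k2 \<longrightarrow> k2 \<in> orb ?s k1"
    proof (intro ballI impI)
      fix k1 k2 assume k12: "k1 \<in> K" "k2 \<in> K" "vt k1 = vt k2"
      have k2o: "k2 \<in> orb s k1" using I3 k12 by blast
      have xo: "?x \<in> orb s k" using funpow_in_orb[of 1 s k] by simp
      note T = transp_same[OF ps kx[symmetric] xo]
      show "k2 \<in> orb ?s k1"
      proof (cases "k1 \<in> orb s k")
        case False
        then show ?thesis using T(3)[of k1] k2o by simp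
      next
        case True
        have O1: "orb s k1 = orb s k" using orb_eq[OF ps True] .
        have ox: "orb ?s ?x = {?x}" using orb_fixed[of ?s ?x] by simp
        have k1x: "k1 \<noteq> ?x" "k2 \<noteq> ?x" using k12 k by auto
        have "k1 \<in> orb ?s k" using T(1) True ox k1x by blast
        moreover have "k2 \<in> orb ?s k" using T(1) k2o O1 ox k1x by blast
        ultimately show ?thesis using orb_eq[OF ps'] by metis
      qed
    qed
    have sub: "{w \<in> X - K. ?s w \<noteq> w} \<subseteq> {w \<in> X - K. s w \<noteq> w} - {?x}"
    proof
      fix w assume w: "w \<in> {w \<in> X - K. ?s w \<noteq> w}"
      then have "w \<noteq> k" using k by auto
      moreover have "w \<noteq> ?x" using w sxx by auto
      ultimately show "w \<in> {w \<in> X - K. s w \<noteq> w} - {?x}" using w by simp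
    qed
    have xin: "?x \<in> {w \<in> X - K. s w \<noteq> w}"
    proof -
      have "s ?x \<noteq> ?x" using injs kx by (metis injD)
      then show ?thesis using xX k by simp
    qed
    have "{w \<in> X - K. ?s w \<noteq> w} \<subset> {w \<in> X - K. s w \<noteq> w}" using sub xin by blast
    then have "card {w \<in> X - K. ?s w \<noteq> w} < card {w \<in> X - K. s w \<noteq> w}"
      using X by (simp add: psubset_card_mono)
    from less.hyps[OF this g' K I2' I3'] obtain s' where
      "good s' a X \<and> dfc s' a X \<le> dfc ?s a X \<and> s' ` K \<subseteq> K \<and> (\<forall>w\<in>X. vt (s' w) = vt w)
           \<and> (\<forall>k1\<in>K. \<forall>k2\<in>K. vt k1 = vt k2 \<longrightarrow> k2 \<in> orb s' k1)" by blast
    then show ?thesis using st by (meson order_trans)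
  qed
qed

lemma card_orb_lp:
  assumes "permutation f" shows "card (orb f x) = least_power f x"
proof -
  have "orb f x = (\<lambda>i. (f ^^ i) x) ` {..<least_power f x}" unfolding orb_perm[OF assms] by blast
  moreover have "inj_on (\<lambda>i. (f ^^ i) x) {..<least_power f x}"
  proof (rule inj_onI)
    fix i j assume ij: "i \<in> {..<least_power f x}" "j \<in> {..<least_power f x}" "(f ^^ i) x = (f ^^ j) x"
    show "i = j"
    proof (rule ccontr)
      assume "i \<noteq> j"
      then consider "i < j" | "j < i" by linarith
      then show False using funpow_distinct[OF assms, of i j x] funpow_distinct[OF assms, of j i x] ij by auto
    qed
  qed
  ultimately show ?thesis by (simp add: card_image)
qed

lemma card_orb_ge4:
  assumes "permutation f" "(f ^^ 1) x \<noteq> x" "(f ^^ 2) x \<noteq> x" "(f ^^ 3) x \<noteq> x"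
  shows "card (orb f x) \<ge> 4"
proof -
  have lp: "(f ^^ least_power f x) x = x" "least_power f x > 0"
    using least_power_of_permutation[OF assms(1)] by auto
  have "least_power f x \<noteq> 1"
  proof assume "least_power f x = 1" then show False using lp(1) assms(2) by simp qed
  moreover have "least_power f x \<noteq> 2"
  proof assume "least_power f x = 2" then show False using lp(1) assms(3) by simp qed
  moreover have "least_power f x \<noteq> 3"
  proof assume "least_power f x = 3" then show False using lp(1) assms(4) by simp qed
  ultimately have "least_power f x \<ge> 4" using lp(2) by linarith
  then show ?thesis using card_orb_lp[OF assms(1)] by simp
qed

lemma sum_orbits:
  assumes p: "permutation f" and K: "finite K" "f ` K \<subseteq> K"
    and ge: "\<And>x. x \<in> K \<Longrightarrow> card (orb f x) \<ge> 4"
  shows "4 * zc f K \<le> card K"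
proof -
  let ?C = "orb f ` K"
  have U: "\<Union>?C = K"
  proof
    show "\<Union>?C \<subseteq> K"
    proof
      fix y assume "y \<in> \<Union>?C"
      then obtain x where "x \<in> K" "y \<in> orb f x" by blast
      then show "y \<in> K" using orb_closed[OF K(2)] by blast
    qed
    show "K \<subseteq> \<Union>?C"
    proof
      fix x assume "x \<in> K" then have "x \<in> orb f x" "orb f x \<in> ?C" by auto
      then show "x \<in> \<Union>?C" by blast
    qed
  qed
  have pw: "pairwise disjnt ?C"
  proof (rule pairwiseI)
    fix A B assume A: "A \<in> ?C" and B: "B \<in> ?C" and AB: "A \<noteq> B"
    obtain x where x: "A = orb f x" using A by blast
    obtain y where y: "B = orb f y" using B by blast
    show "disjnt A B" unfolding disjnt_def
    proof (rule ccontr)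
      assume "A \<inter> B \<noteq> {}"
      then obtain z where z: "z \<in> A" "z \<in> B" by blast
      have "orb f x = orb f y" using orb_disj[OF p, of z x y] z x y by simp
      then show False using x y AB by simp
    qed
  qed
  have fin: "\<And>A. A \<in> ?C \<Longrightarrow> finite A" using finite_orb[OF p] by blast
  have "card K = sum card ?C" using card_Union_disjoint[OF pw fin] U by simp
  moreover have "sum (\<lambda>_. 4) ?C \<le> sum card ?C"
  proof (rule sum_mono)
    fix A assume "A \<in> ?C" then obtain x where "x \<in> K" "A = orb f x" by blast
    then show "4 \<le> card A" using ge by simp
  qed
  ultimately show ?thesis unfolding zc_def by simp
qed


lemma count_list_replicate: "count_list (replicate k x) y = (if x = y then k else 0)"
  by (induction k) auto

definition reach :: "(nat \<Rightarrow> nat \<Rightarrow> nat) \<Rightarrow> nat \<Rightarrow> nat set" where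
  "reach delta q0 = {foldl delta q0 w | w. w \<in> lists {0, 1::nat}}"

definition wit :: "(nat \<Rightarrow> nat \<Rightarrow> nat) \<Rightarrow> nat \<Rightarrow> nat \<Rightarrow> nat list" where
  "wit delta q0 q = (SOME w. w \<in> lists {0, 1::nat} \<and> foldl delta q0 w = q)"

definition N0 :: "(nat \<Rightarrow> nat \<Rightarrow> nat) \<Rightarrow> nat \<Rightarrow> nat \<Rightarrow> int" where
  "N0 delta q0 q = int (count_list (wit delta q0 q) 0)"

definition N1 :: "(nat \<Rightarrow> nat \<Rightarrow> nat) \<Rightarrow> nat \<Rightarrow> nat \<Rightarrow> int" where
  "N1 delta q0 q = int (count_list (wit delta q0 q) 1)"

fun D0 :: "nat \<times> nat \<times> bool \<Rightarrow> int" where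
  "D0 (q, a, b) = (if a = 0 then (if b then 1 else -1) else 0)"

fun D1 :: "nat \<times> nat \<times> bool \<Rightarrow> int" where
  "D1 (q, a, b) = (if a = 1 then (if b then 1 else -1) else 0)"

lemma small_dvd_zero:
  fixes x :: int
  assumes "int n dvd x" "n \<ge> 4" "\<bar>x\<bar> \<le> 3" shows "x = 0"
proof (rule ccontr)
  assume x0: "x \<noteq> 0"
  have "\<bar>int n\<bar> \<le> \<bar>x\<bar>" using dvd_imp_le_int[OF x0 assms(1)] .
  then show False using assms(2,3) by simp
qed

lemma odd3: fixes x y z :: int assumes "odd x" "odd y" "odd z" shows "x + y + z \<noteq> 0"
  using assms by presburger

lemma Dvals:
  assumes "a \<in> {0, 1::nat}"
  shows "(D0 (q, a, b) = 1 \<and> D1 (q, a, b) = 0) \<or> (D0 (q, a, b) = -1 \<and> D1 (q, a, b) = 0)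
       \<or> (D0 (q, a, b) = 0 \<and> D1 (q, a, b) = 1) \<or> (D0 (q, a, b) = 0 \<and> D1 (q, a, b) = -1)"
  using assms by auto

lemma Dodd: "d \<in> darts {0, 1::nat} R \<Longrightarrow> odd (D0 d + D1 d)"
  by (cases d) auto

context
  fixes n p :: nat and Q :: "nat set" and q0 :: nat and F :: "nat set" and delta :: "nat \<Rightarrow> nat \<Rightarrow> nat"
  assumes n4: "n \<ge> 4" and p4: "p \<ge> 4" and dfa: "is_dfa {0, 1::nat} Q q0 F delta"
    and lang: "dfa_lang {0, 1::nat} q0 F delta = L_np n p"
begin

lemma foldl_Q: "q \<in> Q \<Longrightarrow> w \<in> lists {0, 1::nat} \<Longrightarrow> foldl delta q w \<in> Q"
proof (induction w arbitrary: q)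
  case Nil then show ?case by simp
next
  case (Cons a w)
  have "delta q a \<in> Q" using dfa Cons.prems unfolding is_dfa_def by auto
  then show ?case using Cons by simp
qed

abbreviation "RC \<equiv> reach delta q0"

lemma q0Q: "q0 \<in> Q" using dfa unfolding is_dfa_def by simp

lemma reach_Q: "RC \<subseteq> Q"
proof
  fix q assume "q \<in> RC"
  then obtain w where "w \<in> lists {0, 1::nat}" "q = foldl delta q0 w" unfolding reach_def by blast
  then show "q \<in> Q" using foldl_Q[OF q0Q] by simp
qed

lemma q0_reach: "q0 \<in> RC"
  unfolding reach_def by (auto intro!: exI[of _ "[]"])

lemma finite_reach: "finite RC"
proof -
  have "finite Q" using dfa unfolding is_dfa_def by simp
  then show ?thesis using reach_Q finite_subset by auto
qed

lemma wit_props: "q \<in> RC \<Longrightarrow> wit delta q0 q \<in> lists {0, 1} \<and> foldl delta q0 (wit delta q0 q) = q"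
proof -
  assume "q \<in> RC"
  then have ex: "\<exists>w. w \<in> lists {0, 1::nat} \<and> foldl delta q0 w = q" unfolding reach_def by auto
  show ?thesis unfolding wit_def using someI_ex[OF ex] .
qed

lemma reach_step: "q \<in> RC \<Longrightarrow> a \<in> {0, 1} \<Longrightarrow> delta q a \<in> RC"
proof -
  assume q: "q \<in> RC" and a: "a \<in> {0, 1}"
  let ?w = "wit delta q0 q @ [a]"
  have wp: "wit delta q0 q \<in> lists {0, 1}" "foldl delta q0 (wit delta q0 q) = q"
    using wit_props[OF q] by auto
  have "?w \<in> lists {0, 1}" using wp(1) a by simp
  moreover have "foldl delta q0 ?w = delta q a" using wp(2) by simp
  ultimately show ?thesis unfolding reach_def by (intro CollectI exI[of _ ?w]) simp
qed

lemma in_L: "w \<in> L_np n p \<longleftrightarrow> w \<in> lists {0,1} \<and> foldl delta q0 w \<in> F"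
proof -
  have "w \<in> L_np n p \<longleftrightarrow> w \<in> dfa_lang {0, 1::nat} q0 F delta" using lang by simp
  also have "\<dots> \<longleftrightarrow> w \<in> lists {0,1} \<and> foldl delta q0 w \<in> F" unfolding dfa_lang_def by simp
  finally show ?thesis .
qed

lemma MN:
  assumes w: "w \<in> lists {0, 1::nat}" and w': "w' \<in> lists {0, 1::nat}"
    and eq: "foldl delta q0 w = foldl delta q0 w'"
  shows "int n dvd (int (count_list w' 0) - int (count_list w 0))
       \<and> int p dvd (int (count_list w' 1) - int (count_list w 1))"
proof -
  define c0 where "c0 = n - count_list w 0 mod n"
  define c1 where "c1 = p - count_list w 1 mod p"
  define u where "u = replicate c0 (0::nat) @ replicate c1 1"
  have u: "u \<in> lists {0, 1}" unfolding u_def by auto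
  have cu0: "count_list u 0 = c0" and cu1: "count_list u 1 = c1"
    unfolding u_def by (simp_all add: count_list_replicate)
  have m0: "(count_list w 0 + c0) mod n = 0"
  proof -
    let ?A = "count_list w 0"
    have lt: "?A mod n < n" using n4 by simp
    have e: "?A = n * (?A div n) + ?A mod n" by simp
    have "?A + c0 = n * (?A div n) + n" unfolding c0_def using lt e by linarith
    then show ?thesis by simp
  qed
  have m1: "(count_list w 1 + c1) mod p = 0"
  proof -
    let ?A = "count_list w 1"
    have lt: "?A mod p < p" using p4 by simp
    have e: "?A = p * (?A div p) + ?A mod p" by simp
    have "?A + c1 = p * (?A div p) + p" unfolding c1_def using lt e by linarith
    then show ?thesis by simp
  qed
  have "w @ u \<in> L_np n p" unfolding L_np_def using w u m0 m1 cu0 cu1 by simp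
  then have "foldl delta q0 (w @ u) \<in> F" using in_L by blast
  then have "foldl delta q0 (w' @ u) \<in> F" using eq by simp
  then have "w' @ u \<in> L_np n p" using in_L w' u by simp
  then have m0': "(count_list w' 0 + c0) mod n = 0" and m1': "(count_list w' 1 + c1) mod p = 0"
    unfolding L_np_def using cu0 cu1 by auto
  have cv: "int m dvd int x + int c" if "(x + c) mod m = 0" for m x c :: nat
  proof -
    have "m dvd x + c" using that by (simp add: dvd_eq_mod_eq_0)
    then have "int m dvd int (x + c)" by (simp only: of_nat_dvd_iff)
    then show ?thesis by simp
  qed
  have df: "int m dvd (b - a)" if "int m dvd a + c" "int m dvd b + c" for m :: nat and a b c :: int
  proof -
    have "int m dvd (b + c) - (a + c)" using that dvd_diff by blast
    then show ?thesis by simp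
  qed
  have A: "int n dvd (int (count_list w' 0) - int (count_list w 0))"
    using df[OF cv[OF m0] cv[OF m0']] .
  have B: "int p dvd (int (count_list w' 1) - int (count_list w 1))"
    using df[OF cv[OF m1] cv[OF m1']] .
  show ?thesis using A B by simp
qed

lemma MN':
  assumes w: "w \<in> lists {0, 1::nat}" and q: "foldl delta q0 w = q"
  shows "int n dvd (int (count_list w 0) - N0 delta q0 q) \<and> int p dvd (int (count_list w 1) - N1 delta q0 q)"
proof -
  have qR: "q \<in> RC" using w q unfolding reach_def by blast
  note wp = wit_props[OF qR]
  show ?thesis using MN[OF conjunct1[OF wp] w] conjunct2[OF wp] q unfolding N0_def N1_def by simp
qed

lemma N_step:
  assumes q: "q \<in> RC" and a: "a \<in> {0, 1::nat}"
  shows "int n dvd (N0 delta q0 (delta q a) - N0 delta q0 q - (if a = 0 then 1 else 0))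
       \<and> int p dvd (N1 delta q0 (delta q a) - N1 delta q0 q - (if a = 1 then 1 else 0))"
proof -
  let ?w = "wit delta q0 q"
  have w: "?w \<in> lists {0,1}" "foldl delta q0 ?w = q" using wit_props[OF q] by auto
  have wa: "?w @ [a] \<in> lists {0,1}" "foldl delta q0 (?w @ [a]) = delta q a" using w a by auto
  note M1 = MN'[OF wa]
  note M2 = MN'[OF w]
  have c0: "int (count_list (?w @ [a]) 0) = int (count_list ?w 0) + (if a = 0 then 1 else 0)" by simp
  have c1: "int (count_list (?w @ [a]) 1) = int (count_list ?w 1) + (if a = 1 then 1 else 0)" by simp
  have "int n dvd ((int (count_list ?w 0) - N0 delta q0 q) - (int (count_list (?w @ [a]) 0) - N0 delta q0 (delta q a)))"
    using M1 M2 dvd_diff by blast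
  moreover have E0: "(int (count_list ?w 0) - N0 delta q0 q) - (int (count_list (?w @ [a]) 0) - N0 delta q0 (delta q a))
      = N0 delta q0 (delta q a) - N0 delta q0 q - (if a = 0 then 1 else 0)" unfolding c0 by simp
  ultimately have A: "int n dvd (N0 delta q0 (delta q a) - N0 delta q0 q - (if a = 0 then 1 else 0))" by (simp only: E0)
  have "int p dvd ((int (count_list ?w 1) - N1 delta q0 q) - (int (count_list (?w @ [a]) 1) - N1 delta q0 (delta q a)))"
    using M1 M2 dvd_diff by blast
  moreover have E1: "(int (count_list ?w 1) - N1 delta q0 q) - (int (count_list (?w @ [a]) 1) - N1 delta q0 (delta q a))
      = N1 delta q0 (delta q a) - N1 delta q0 q - (if a = 1 then 1 else 0)" unfolding c1 by simp
  ultimately have B: "int p dvd (N1 delta q0 (delta q a) - N1 delta q0 q - (if a = 1 then 1 else 0))" by (simp only: E1)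
  show ?thesis using A B by simp
qed

lemma dart_step:
  assumes d: "d \<in> DD RC"
  shows "dart_vertex delta d \<in> RC \<and> dart_vertex delta (dart_rev d) \<in> RC
    \<and> int n dvd (N0 delta q0 (dart_vertex delta (dart_rev d)) - N0 delta q0 (dart_vertex delta d) - D0 d)
    \<and> int p dvd (N1 delta q0 (dart_vertex delta (dart_rev d)) - N1 delta q0 (dart_vertex delta d) - D1 d)"
proof -
  obtain q a b where dd: "d = (q, a, b)" by (cases d) auto
  have q: "q \<in> RC" and a: "a \<in> {0,1}" using d dd by auto
  have qa: "delta q a \<in> RC" using reach_step[OF q a] .
  note S = N_step[OF q a]
  show ?thesis
  proof (cases b)
    case True then show ?thesis using dd q qa S by auto
  next
    case False
    have e1: "N0 delta q0 q - N0 delta q0 (delta q a) - D0 d = - (N0 delta q0 (delta q a) - N0 delta q0 q - (if a = 0 then 1 else 0))"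
      using dd False by simp
    have e2: "N1 delta q0 q - N1 delta q0 (delta q a) - D1 d = - (N1 delta q0 (delta q a) - N1 delta q0 q - (if a = 1 then 1 else 0))"
      using dd False by simp
    show ?thesis using dd False q qa S e1 e2 by (simp only: dart_vertex.simps dart_rev.simps if_False if_True not_False_eq_True dvd_minus_iff)
  qed
qed

end


lemma zc_al0_gen:
  assumes RQ: "R \<subseteq> Q" and fin: "finite R"
  shows "zc (al0 Q) (DD R) = 2 * card R"
proof -
  let ?P = "\<lambda>(q::nat, a::nat). {(q, a, True), (q, a, False)}"
  have sub: "DD R \<subseteq> DD Q" using RQ unfolding darts_def by auto
  have "orb (al0 Q) ` DD R = ?P ` (R \<times> {0,1::nat})"
  proof (intro set_eqI iffI)
    fix S assume "S \<in> orb (al0 Q) ` DD R"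
    then obtain d where d: "d \<in> DD R" "S = orb (al0 Q) d" by blast
    obtain q a b where dd: "d = (q, a, b)" by (cases d) auto
    have dQ: "d \<in> DD Q" using sub d by blast
    have "S = ?P (q, a)" using orb_al0[OF dQ] d dd by (cases b) auto
    then show "S \<in> ?P ` (R \<times> {0,1::nat})" using d dd by auto
  next
    fix S assume "S \<in> ?P ` (R \<times> {0,1::nat})"
    then obtain q a where qa: "q \<in> R" "a \<in> {0,1::nat}" "S = ?P (q, a)" by blast
    have d: "(q, a, True) \<in> DD R" using qa by simp
    have dQ: "(q, a, True) \<in> DD Q" using sub d by blast
    have "S = orb (al0 Q) (q, a, True)" using orb_al0[OF dQ] qa by auto
    then show "S \<in> orb (al0 Q) ` DD R" using d by blast
  qed
  moreover have "inj_on ?P (R \<times> {0,1::nat})"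
  proof (rule inj_onI)
    fix x y assume xy: "x \<in> R \<times> {0,1::nat}" "y \<in> R \<times> {0,1::nat}" "?P x = ?P y"
    obtain q a where x: "x = (q, a)" by (cases x) auto
    obtain q' a' where y: "y = (q', a')" by (cases y) auto
    have "(q, a, True) \<in> ?P x" using x by simp
    then have "(q, a, True) \<in> ?P y" using xy(3) by simp
    then show "x = y" using x y by simp
  qed
  ultimately have "zc (al0 Q) (DD R) = card (R \<times> {0,1::nat})" unfolding zc_def by (simp add: card_image)
  then show ?thesis using fin by (simp add: card_cartesian_product)
qed

context
  fixes n p :: nat and Q :: "nat set" and q0 :: nat and F :: "nat set" and delta :: "nat \<Rightarrow> nat \<Rightarrow> nat"
  assumes n4: "n \<ge> 4" and p4: "p \<ge> 4" and dfa: "is_dfa {0, 1::nat} Q q0 F delta"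
    and lang: "dfa_lang {0, 1::nat} q0 F delta = L_np n p"
begin

abbreviation "Rch \<equiv> reach delta q0"
abbreviation "KK \<equiv> DD Rch"

lemmas dstep = dart_step[OF n4 p4 dfa lang]
lemmas rQ = reach_Q[OF n4 p4 dfa lang]

lemma KK_sub: "KK \<subseteq> DD Q" using rQ unfolding darts_def by auto

lemma al0_K: "d \<in> KK \<Longrightarrow> al0 Q d = dart_rev d"
  using KK_sub unfolding al0_def by auto

lemma faces_ge4:
  assumes ps: "permutation s" and sK: "s ` KK \<subseteq> KK"
    and I2: "\<forall>w\<in>DD Q. dart_vertex delta (s w) = dart_vertex delta w"
    and nofix: "\<forall>k\<in>KK. s k \<noteq> k" and d: "d \<in> KK"
  shows "((s \<circ> al0 Q) ^^ 1) d \<noteq> d" "((s \<circ> al0 Q) ^^ 2) d \<noteq> d" "((s \<circ> al0 Q) ^^ 3) d \<noteq> d"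
proof -
  let ?f = "s \<circ> al0 Q"
  define ds where "ds i = (?f ^^ i) d" for i
  have dsK: "ds i \<in> KK" for i
  proof (induction i)
    case 0 then show ?case using d by (simp add: ds_def)
  next
    case (Suc i)
    have "dart_rev (ds i) \<in> KK" using Suc rev_DD by blast
    then have "s (dart_rev (ds i)) \<in> KK" using sK by blast
    moreover have "ds (Suc i) = s (al0 Q (ds i))" unfolding ds_def by simp
    ultimately show ?case using al0_K[OF Suc] by simp
  qed
  have dsS: "ds (Suc i) = s (dart_rev (ds i))" for i
  proof -
    have "ds (Suc i) = s (al0 Q (ds i))" unfolding ds_def by simp
    then show ?thesis using al0_K[OF dsK[of i]] by simp
  qed
  have vS: "dart_vertex delta (ds (Suc i)) = dart_vertex delta (dart_rev (ds i))" for i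
  proof -
    have "dart_rev (ds i) \<in> DD Q" using rev_DD[OF dsK[of i]] KK_sub by blast
    then show ?thesis using I2 dsS[of i] by simp
  qed
  let ?N0 = "\<lambda>i. N0 delta q0 (dart_vertex delta (ds i))"
  let ?N1 = "\<lambda>i. N1 delta q0 (dart_vertex delta (ds i))"
  have walk: "int n dvd (?N0 j - ?N0 0 - (\<Sum>i<j. D0 (ds i))) \<and> int p dvd (?N1 j - ?N1 0 - (\<Sum>i<j. D1 (ds i)))" for j
  proof (induction j)
    case 0 then show ?case by simp
  next
    case (Suc j)
    have st: "int n dvd (?N0 (Suc j) - ?N0 j - D0 (ds j)) \<and> int p dvd (?N1 (Suc j) - ?N1 j - D1 (ds j))"
      using dstep[OF dsK[of j]] unfolding vS[of j] by blast
    have e0: "?N0 (Suc j) - ?N0 0 - (\<Sum>i<Suc j. D0 (ds i)) = (?N0 j - ?N0 0 - (\<Sum>i<j. D0 (ds i))) + (?N0 (Suc j) - ?N0 j - D0 (ds j))"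
      by simp
    have e1: "?N1 (Suc j) - ?N1 0 - (\<Sum>i<Suc j. D1 (ds i)) = (?N1 j - ?N1 0 - (\<Sum>i<j. D1 (ds i))) + (?N1 (Suc j) - ?N1 j - D1 (ds j))"
      by simp
    show ?case unfolding e0 e1
      by (rule conjI[OF dvd_add[OF conjunct1[OF Suc.IH] conjunct1[OF st]] dvd_add[OF conjunct2[OF Suc.IH] conjunct2[OF st]]])
  qed
  have closed: "int n dvd (\<Sum>i<j. D0 (ds i)) \<and> int p dvd (\<Sum>i<j. D1 (ds i))" if "ds j = d" for j
  proof -
    have "ds 0 = d" unfolding ds_def by simp
    then have "?N0 j = ?N0 0" "?N1 j = ?N1 0" using that by simp_all
    then have "?N0 j - ?N0 0 - (\<Sum>i<j. D0 (ds i)) = - (\<Sum>i<j. D0 (ds i))"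
      "?N1 j - ?N1 0 - (\<Sum>i<j. D1 (ds i)) = - (\<Sum>i<j. D1 (ds i))" by simp_all
    then show ?thesis using walk[of j] by (simp only: dvd_minus_iff)
  qed
  have Dv: "(D0 (ds i) = 1 \<and> D1 (ds i) = 0) \<or> (D0 (ds i) = -1 \<and> D1 (ds i) = 0)
       \<or> (D0 (ds i) = 0 \<and> D1 (ds i) = 1) \<or> (D0 (ds i) = 0 \<and> D1 (ds i) = -1)" for i
  proof -
    obtain q a b where e: "ds i = (q, a, b)" by (cases "ds i") auto
    have "a \<in> {0,1}" using dsK[of i] e by simp
    then show ?thesis using Dvals[of a q b] e by simp
  qed
  have Do: "odd (D0 (ds i) + D1 (ds i))" for i using Dodd[OF dsK[of i]] .
  have absD: "\<bar>D0 (ds i)\<bar> \<le> 1" "\<bar>D1 (ds i)\<bar> \<le> 1" for i using Dv[of i] by auto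
  show "(?f ^^ 1) d \<noteq> d"
  proof
    assume "(?f ^^ 1) d = d"
    then have "ds 1 = d" unfolding ds_def .
    then have c: "int n dvd D0 (ds 0)" "int p dvd D1 (ds 0)" using closed[of 1] by auto
    have "D0 (ds 0) = 0" using small_dvd_zero[OF c(1) n4] absD[of 0] by simp
    moreover have "D1 (ds 0) = 0" using small_dvd_zero[OF c(2) p4] absD[of 0] by simp
    ultimately show False using Do[of 0] by simp
  qed
  show "(?f ^^ 3) d \<noteq> d"
  proof
    assume "(?f ^^ 3) d = d"
    then have "ds 3 = d" unfolding ds_def .
    then have c: "int n dvd (D0 (ds 0) + D0 (ds 1) + D0 (ds 2))" "int p dvd (D1 (ds 0) + D1 (ds 1) + D1 (ds 2))"
      using closed[of 3] by (simp_all add: numeral_3_eq_3 numeral_2_eq_2)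
    have "D0 (ds 0) + D0 (ds 1) + D0 (ds 2) = 0"
      using small_dvd_zero[OF c(1) n4] absD[of 0] absD[of 1] absD[of 2] by simp
    moreover have "D1 (ds 0) + D1 (ds 1) + D1 (ds 2) = 0"
      using small_dvd_zero[OF c(2) p4] absD[of 0] absD[of 1] absD[of 2] by simp
    ultimately have "(D0 (ds 0) + D1 (ds 0)) + (D0 (ds 1) + D1 (ds 1)) + (D0 (ds 2) + D1 (ds 2)) = 0" by simp
    then show False using odd3[OF Do[of 0] Do[of 1] Do[of 2]] by simp
  qed
  show "(?f ^^ 2) d \<noteq> d"
  proof
    assume "(?f ^^ 2) d = d"
    then have d2: "ds 2 = d" unfolding ds_def .
    then have c: "int n dvd (D0 (ds 0) + D0 (ds 1))" "int p dvd (D1 (ds 0) + D1 (ds 1))"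
      using closed[of 2] by (simp_all add: numeral_2_eq_2)
    have z0: "D0 (ds 0) + D0 (ds 1) = 0"
      using small_dvd_zero[OF c(1) n4] absD[of 0] absD[of 1] by simp
    have z1: "D1 (ds 0) + D1 (ds 1) = 0"
      using small_dvd_zero[OF c(2) p4] absD[of 0] absD[of 1] by simp
    have d0: "ds 0 = d" unfolding ds_def by simp
    obtain q a b where e: "d = (q, a, b)" by (cases d) auto
    obtain q' a' b' where e': "ds 1 = (q', a', b')" by (cases "ds 1") auto
    have aa: "a \<in> {0,1}" "a' \<in> {0,1}" using d e dsK[of 1] e' by auto
    have ab: "a' = a \<and> b' = (\<not> b)" using z0 z1 d0 e e' aa by (auto split: if_splits)
    have v1: "dart_vertex delta (ds 1) = dart_vertex delta (dart_rev d)" using vS[of 0] d0 by simp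
    have v2: "dart_vertex delta (dart_rev (ds 1)) = dart_vertex delta d"
      using vS[of 1] d2 by (simp add: numeral_2_eq_2)
    have "ds 1 = dart_rev d"
    proof (cases b)
      case True then show ?thesis using v2 e e' ab by simp
    next
      case False then show ?thesis using v1 e e' ab by simp
    qed
    then have "s (dart_rev d) = dart_rev d" using dsS[of 0] d0 by simp
    moreover have "dart_rev d \<in> KK" using rev_DD[OF d] .
    ultimately show False using nofix by blast
  qed
qed

end


context
  fixes n p :: nat and Q :: "nat set" and q0 :: nat and F :: "nat set" and delta :: "nat \<Rightarrow> nat \<Rightarrow> nat"
  assumes n4: "n \<ge> 4" and p4: "p \<ge> 4" and dfa: "is_dfa {0, 1::nat} Q q0 F delta"
    and lang: "dfa_lang {0, 1::nat} q0 F delta = L_np n p"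
begin

abbreviation "Rc \<equiv> reach delta q0"
abbreviation "Kc \<equiv> DD Rc"

lemma lower_bound:
  assumes rot: "rotation_system {0,1} Q delta sigma"
  shows "dfc (sg0 Q sigma) (al0 Q) (DD Q) \<ge> 2"
proof -
  let ?s0 = "sg0 Q sigma" and ?a = "al0 Q" and ?X = "DD Q"
  let ?vt = "dart_vertex delta"
  have g0: "good ?s0 ?a ?X" using good_bridge[OF dfa rot] .
  have KX: "Kc \<subseteq> ?X" using KK_sub[OF n4 p4 dfa lang] .
  have finR: "finite Rc" using finite_reach[OF n4 p4 dfa lang] .
  have RQ: "Rc \<subseteq> Q" using reach_Q[OF n4 p4 dfa lang] .
  have aK: "?a ` Kc \<subseteq> Kc"
  proof
    fix y assume "y \<in> ?a ` Kc"
    then obtain d where d: "d \<in> Kc" "y = ?a d" by blast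
    then show "y \<in> Kc" using al0_K[OF n4 p4 dfa lang d(1)] rev_DD[OF d(1)] by simp
  qed
  have I2: "\<forall>w\<in>?X. ?vt (?s0 w) = ?vt w"
    using rot_facts(2)[OF rot] by (simp add: sg0_def)
  have I3: "\<forall>k1\<in>Kc. \<forall>k2\<in>Kc. ?vt k1 = ?vt k2 \<longrightarrow> k2 \<in> orb ?s0 k1"
  proof (intro ballI impI)
    fix k1 k2 assume k: "k1 \<in> Kc" "k2 \<in> Kc" "?vt k1 = ?vt k2"
    have "k1 \<in> ?X" "k2 \<in> ?X" using k KX by auto
    then show "k2 \<in> orb ?s0 k1" using orb_sg0[OF dfa rot] k by simp
  qed
  obtain s where s: "good s ?a ?X" "dfc s ?a ?X \<le> dfc ?s0 ?a ?X" "s ` Kc \<subseteq> Kc"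
    "\<forall>w\<in>?X. ?vt (s w) = ?vt w" "\<forall>k1\<in>Kc. \<forall>k2\<in>Kc. ?vt k1 = ?vt k2 \<longrightarrow> k2 \<in> orb s k1"
    using extract_core[OF g0 KX aK I2 I3] by blast
  have ps: "permutation s" using s(1) unfolding good_def by simp
  have pa: "permutation ?a" using s(1) unfolding good_def by simp
  note add = dfc_add[OF s(1) KX s(3) aK]
  have rest: "0 \<le> dfc s ?a (?X - Kc)" using dfc_nonneg[OF add(3)] by simp
  have vR: "?vt k \<in> Rc" if "k \<in> Kc" for k using dart_step[OF n4 p4 dfa lang that] by simp
  have nofix: "\<forall>k\<in>Kc. s k \<noteq> k"
  proof
    fix k assume k: "k \<in> Kc"
    let ?v = "?vt k"
    have e: "(?v, 0, True) \<in> Kc" "(?v, 1, True) \<in> Kc" using vR[OF k] by auto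
    have "(?v, 0, True) \<in> orb s k" "(?v, 1, True) \<in> orb s k" using s(5) k e by auto
    note o = this
    show "s k \<noteq> k"
    proof
      assume "s k = k"
      then have "orb s k = {k}" using orb_fixed[of s k] by simp
      then have "(?v, 0, True) = k" "(?v, 1, True) = k" using o by auto
      then have "(?v, 0::nat, True) = (?v, 1, True)" by simp
      then show False by simp
    qed
  qed
  have finK: "finite Kc" using finite_DD[OF finR] .
  have cK: "card Kc = 4 * card Rc" using card_DD[OF finR] .
  have za: "zc ?a Kc = 2 * card Rc" using zc_al0_gen[OF RQ finR] .
  have zs: "zc s Kc \<le> card Rc"
  proof -
    let ?V = "\<lambda>q. {e \<in> Kc. ?vt e = q}"
    have orbK: "orb s k = ?V (?vt k)" if k: "k \<in> Kc" for k
    proof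
      have it: "(s ^^ m) k \<in> Kc \<and> ?vt ((s ^^ m) k) = ?vt k" for m
      proof (induction m)
        case 0 then show ?case using k by simp
      next
        case (Suc m)
        have "s ((s ^^ m) k) \<in> Kc" using Suc s(3) by blast
        moreover have "?vt (s ((s ^^ m) k)) = ?vt ((s ^^ m) k)" using s(4) Suc KX by blast
        ultimately show ?case using Suc by simp
      qed
      show "orb s k \<subseteq> ?V (?vt k)" unfolding orb_def using it by auto
      show "?V (?vt k) \<subseteq> orb s k" using s(5) k by auto
    qed
    have "orb s ` Kc \<subseteq> ?V ` Rc" using orbK vR by auto
    then have "card (orb s ` Kc) \<le> card (?V ` Rc)" using finR by (simp add: card_mono)
    also have "\<dots> \<le> card Rc" using card_image_le[OF finR] .
    finally show ?thesis unfolding zc_def .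
  qed
  have zf: "4 * zc (s \<circ> ?a) Kc \<le> card Kc"
  proof (rule sum_orbits)
    show "permutation (s \<circ> ?a)" using ps pa by (rule permutation_compose)
    show "finite Kc" using finK .
    show "(s \<circ> ?a) ` Kc \<subseteq> Kc" using s(3) aK by (auto simp: image_subset_iff)
    fix x assume x: "x \<in> Kc"
    note fg = faces_ge4[OF n4 p4 dfa lang ps s(3) s(4) nofix x]
    show "card (orb (s \<circ> ?a) x) \<ge> 4"
      by (rule card_orb_ge4[OF _ fg]) (rule permutation_compose[OF ps pa])
  qed
  have cc1: "cc s ?a Kc \<ge> 1"
  proof -
    have "(q0, 0, True) \<in> Kc" using q0_reach[OF n4 p4 dfa lang] by simp
    then have "cmp s ?a Kc ` Kc \<noteq> {}" by blast
    moreover have "finite (cmp s ?a Kc ` Kc)" using finK by simp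
    ultimately show ?thesis unfolding cc_def by (simp add: Suc_leI card_gt_0_iff)
  qed
  have "dfc s ?a Kc \<ge> 2"
    unfolding dfc_def using cK za zs zf cc1 by linarith
  then show ?thesis using add(1) rest s(2) by linarith
qed

end


definition shift :: "nat \<Rightarrow> nat \<Rightarrow> nat \<Rightarrow> nat \<Rightarrow> nat \<Rightarrow> nat" where
  "shift n p a b q = (q mod n + a) mod n + n * ((q div n + b) mod p)"

definition dT :: "nat \<Rightarrow> nat \<Rightarrow> nat \<Rightarrow> nat \<Rightarrow> nat" where
  "dT n p q a = (if a = 0 then shift n p 1 0 q else shift n p 0 1 q)"

fun sT :: "nat \<Rightarrow> nat \<Rightarrow> nat \<times> nat \<times> bool \<Rightarrow> nat \<times> nat \<times> bool" where
  "sT n p (q, a, b) =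
     (if a = 0 then (if b then (q, 1, True) else (shift n p 0 (p - 1) (shift n p 1 0 q), 1, False))
      else (if b then (shift n p (n - 1) 0 q, 0, False) else (shift n p 0 1 q, 0, True)))"

context
  fixes n p :: nat
  assumes n4: "n \<ge> 4" and p4: "p \<ge> 4"
begin

lemma np0: "n > 0" "p > 0" using n4 p4 by auto

lemma enc_lt: "i < n \<Longrightarrow> j < p \<Longrightarrow> i + n * j < n * p"
proof -
  assume "i < n" "j < p"
  then have "i + n * j < n + n * j" by simp
  also have "\<dots> = n * (j + 1)" by simp
  also have "\<dots> \<le> n * p" using \<open>j < p\<close> by (intro mult_le_mono2) simp
  finally show ?thesis .
qed

lemma enc_mod: "i < n \<Longrightarrow> (i + n * j) mod n = i" by simp
lemma enc_div: "i < n \<Longrightarrow> (i + n * j) div n = j" using np0 by simp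

lemma shift_Q: "shift n p a b q < n * p"
  unfolding shift_def using np0 by (intro enc_lt) auto

lemma shift_mod: "shift n p a b q mod n = (q mod n + a) mod n"
  unfolding shift_def using np0 by (simp add: enc_mod)

lemma shift_div: "shift n p a b q div n = (q div n + b) mod p"
  unfolding shift_def using np0 by (simp add: enc_div)

lemma shift_shift: "shift n p a b (shift n p c d q) = shift n p (c + a) (d + b) q"
  unfolding shift_def using np0 by (simp add: enc_mod enc_div mod_add_left_eq add.assoc)

lemma shift_cong: "a mod n = a' mod n \<Longrightarrow> b mod p = b' mod p \<Longrightarrow> shift n p a b q = shift n p a' b' q"
  unfolding shift_def by (metis mod_add_right_eq)

lemma shift_id: "q < n * p \<Longrightarrow> a mod n = 0 \<Longrightarrow> b mod p = 0 \<Longrightarrow> shift n p a b q = q"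
proof -
  assume q: "q < n * p" and a: "a mod n = 0" and b: "b mod p = 0"
  have lt: "q div n < p" using q np0 by (simp add: div_less_iff_less_mult mult.commute)
  have "shift n p a b q = shift n p 0 0 q" using shift_cong[of a 0 b 0 q] a b by simp
  also have "\<dots> = q mod n + n * (q div n mod p)" unfolding shift_def by simp
  also have "\<dots> = q mod n + n * (q div n)" using lt by simp
  also have "\<dots> = q" by simp
  finally show ?thesis .
qed

abbreviation "Qt \<equiv> {..<n * p}"

lemma dT_Q: "dT n p q a \<in> Qt" unfolding dT_def using shift_Q by simp

lemma is_dfa_T: "is_dfa {0, 1::nat} Qt 0 {0} (dT n p)"
proof -
  have "0 < n * p" using np0 by simp
  then show ?thesis unfolding is_dfa_def using dT_Q by blast
qed

lemma foldl_T: "w \<in> lists {0, 1::nat} \<Longrightarrow> foldl (dT n p) 0 w = count_list w 0 mod n + n * (count_list w 1 mod p)"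
proof (induction w rule: rev_induct)
  case Nil then show ?case by simp
next
  case (snoc a w)
  then have IH: "foldl (dT n p) 0 w = count_list w 0 mod n + n * (count_list w 1 mod p)" and a: "a \<in> {0,1}" by auto
  let ?q = "count_list w 0 mod n + n * (count_list w 1 mod p)"
  have m: "?q mod n = count_list w 0 mod n" using np0 by (simp add: enc_mod)
  have d: "?q div n = count_list w 1 mod p" using np0 by (simp add: enc_div)
  show ?case
  proof (cases "a = 0")
    case True
    have "foldl (dT n p) 0 (w @ [a]) = shift n p 1 0 ?q" using IH True by (simp add: dT_def)
    also have "\<dots> = (count_list w 0 mod n + 1) mod n + n * ((count_list w 1 mod p) mod p)"
      unfolding shift_def m d by simp
    also have "\<dots> = count_list (w @ [a]) 0 mod n + n * (count_list (w @ [a]) 1 mod p)"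
      using True by (simp add: mod_Suc_eq)
    finally show ?thesis .
  next
    case False
    then have a1: "a = 1" using a by simp
    have "foldl (dT n p) 0 (w @ [a]) = shift n p 0 1 ?q" using IH a1 by (simp add: dT_def)
    also have "\<dots> = (count_list w 0 mod n) mod n + n * ((count_list w 1 mod p + 1) mod p)"
      unfolding shift_def m d by simp
    also have "\<dots> = count_list (w @ [a]) 0 mod n + n * (count_list (w @ [a]) 1 mod p)"
      using a1 by (simp add: mod_Suc_eq)
    finally show ?thesis .
  qed
qed

lemma lang_T: "dfa_lang {0, 1::nat} 0 {0} (dT n p) = L_np n p"
proof -
  have "foldl (dT n p) 0 w = 0 \<longleftrightarrow> count_list w 0 mod n = 0 \<and> count_list w 1 mod p = 0"
    if "w \<in> lists {0, 1::nat}" for w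
    using foldl_T[OF that] np0 by simp
  note eq = this
  show ?thesis
  proof (intro set_eqI)
    fix w
    show "w \<in> dfa_lang {0, 1::nat} 0 {0} (dT n p) \<longleftrightarrow> w \<in> L_np n p"
    proof (cases "w \<in> lists {0, 1::nat}")
      case True then show ?thesis unfolding dfa_lang_def L_np_def using eq[OF True] by simp
    next
      case False then show ?thesis unfolding dfa_lang_def L_np_def by simp
    qed
  qed
qed

end


lemma sum_orbits_le:
  assumes p: "permutation f" and K: "finite K" "f ` K \<subseteq> K"
    and le: "\<And>x. x \<in> K \<Longrightarrow> card (orb f x) \<le> 4"
  shows "card K \<le> 4 * zc f K"
proof -
  let ?C = "orb f ` K"
  have U: "\<Union>?C = K"
  proof
    show "\<Union>?C \<subseteq> K"
    proof
      fix y assume "y \<in> \<Union>?C"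
      then obtain x where "x \<in> K" "y \<in> orb f x" by blast
      then show "y \<in> K" using orb_closed[OF K(2)] by blast
    qed
    show "K \<subseteq> \<Union>?C"
    proof
      fix x assume "x \<in> K" then have "x \<in> orb f x" "orb f x \<in> ?C" by auto
      then show "x \<in> \<Union>?C" by blast
    qed
  qed
  have pw: "pairwise disjnt ?C"
  proof (rule pairwiseI)
    fix A B assume A: "A \<in> ?C" and B: "B \<in> ?C" and AB: "A \<noteq> B"
    obtain x where x: "A = orb f x" using A by blast
    obtain y where y: "B = orb f y" using B by blast
    show "disjnt A B" unfolding disjnt_def
    proof (rule ccontr)
      assume "A \<inter> B \<noteq> {}"
      then obtain z where z: "z \<in> A" "z \<in> B" by blast
      have "orb f x = orb f y" using orb_disj[OF p, of z x y] z x y by simp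
      then show False using x y AB by simp
    qed
  qed
  have fin: "\<And>A. A \<in> ?C \<Longrightarrow> finite A" using finite_orb[OF p] by blast
  have "card K = sum card ?C" using card_Union_disjoint[OF pw fin] U by simp
  moreover have "sum card ?C \<le> sum (\<lambda>_. 4) ?C"
  proof (rule sum_mono)
    fix A assume "A \<in> ?C" then obtain x where "x \<in> K" "A = orb f x" by blast
    then show "card A \<le> 4" using le by simp
  qed
  ultimately show ?thesis unfolding zc_def by simp
qed

context
  fixes n p :: nat
  assumes n4: "n \<ge> 4" and p4: "p \<ge> 4"
begin

abbreviation "Qt' \<equiv> {..<n * p}"
abbreviation "E' \<equiv> shift n p 1 0"
abbreviation "N' \<equiv> shift n p 0 1"
abbreviation "W' \<equiv> shift n p (n - 1) 0"
abbreviation "S' \<equiv> shift n p 0 (p - 1)"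

lemmas sh = shift_shift[OF n4 p4] shift_Q[OF n4 p4]

lemma shid: assumes "q < n * p" "a mod n = 0" "b mod p = 0" shows "shift n p a b q = q"
  using shift_id[OF n4 p4 assms] .

lemma n1: "n - 1 + 1 = n" "p - 1 + 1 = p" "1 + (n - 1) = n" "1 + (p - 1) = p" using n4 p4 by auto

lemma modp1: "(p - 1 + 1 + 1) mod p = 1 mod p"
proof -
  have e: "p - 1 + 1 + 1 = p + 1" using p4 by simp
  show ?thesis unfolding e by (rule mod_add_self1)
qed

lemma id1: "q < n * p \<Longrightarrow> N' (S' (E' (W' q))) = q"
  unfolding sh(1) by (rule shid) (use n1 in simp_all)
lemma id2: "q < n * p \<Longrightarrow> W' (N' (S' (E' q))) = q"
  unfolding sh(1) by (rule shid) (use n1 in simp_all)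
lemma id3: "q < n * p \<Longrightarrow> S' (E' (W' (N' q))) = q"
  unfolding sh(1) by (rule shid) (use n1 in simp_all)
lemma id4: "q < n * p \<Longrightarrow> E' (W' q) = q"
  unfolding sh(1) by (rule shid) (use n1 in simp_all)
lemma id5: "q < n * p \<Longrightarrow> W' (E' q) = q"
  unfolding sh(1) by (rule shid) (use n1 in simp_all)
lemma id6: "N' (S' (E' q)) = E' q"
  unfolding sh(1) by (rule shift_cong[OF n4 p4]) (use n1 in simp_all)
lemma id7: "W' (N' (S' (E' (N' q)))) = N' q"
  unfolding sh(1) by (rule shift_cong[OF n4 p4]) (use n1 modp1 in simp_all)
lemma id9: "q < n * p \<Longrightarrow> N' (S' q) = q"
  unfolding sh(1) by (rule shid) (use n1 in simp_all)
lemma id10: "q < n * p \<Longrightarrow> S' (N' q) = q"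
  unfolding sh(1) by (rule shid) (use n1 in simp_all)
lemma id8: "N' (W' q) = W' (N' q)"
  unfolding sh(1) by (simp add: add.commute)

abbreviation "sg \<equiv> sT n p"
abbreviation "vt \<equiv> dart_vertex (dT n p)"

lemma funpow4: "(f ^^ 4) x = f (f (f (f x)))" by (simp add: numeral_eq_Suc)
lemma funpow3: "(f ^^ 3) x = f (f (f x))" by (simp add: numeral_eq_Suc)
lemma funpow2: "(f ^^ 2) x = f (f x)" by (simp add: numeral_eq_Suc)

lemma sT_0T: "sg (q, 0, True) = (q, 1, True)" by simp
lemma sT_0F: "sg (q, 0, False) = (S' (E' q), 1, False)" by simp
lemma sT_1T: "sg (q, 1, True) = (W' q, 0, False)" by simp
lemma sT_1F: "sg (q, 1, False) = (N' q, 0, True)" by simp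

lemma dT0: "dT n p q 0 = E' q" by (simp add: dT_def)
lemma dT1: "dT n p q 1 = N' q" by (simp add: dT_def)

lemma DD_cases:
  assumes "d \<in> DD Qt'"
  obtains q where "q < n * p" "d = (q, 0, True)" | q where "q < n * p" "d = (q, 0, False)"
    | q where "q < n * p" "d = (q, 1, True)" | q where "q < n * p" "d = (q, 1, False)"
proof -
  obtain q a b where dd: "d = (q, a, b)" by (cases d) auto
  have "q < n * p" "a = 0 \<or> a = 1" using assms dd by auto
  then show ?thesis using that dd by (cases b) auto
qed

lemma sT_DD: "d \<in> DD Qt' \<Longrightarrow> sg d \<in> DD Qt'"
  by (erule DD_cases) (simp_all only: sT_0T sT_0F sT_1T sT_1F darts_mem sh(2) lessThan_iff insert_iff simp_thms)

lemma sT4: "d \<in> DD Qt' \<Longrightarrow> (sg ^^ 4) d = d"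
  by (erule DD_cases) (simp_all only: funpow4 sT_0T sT_0F sT_1T sT_1F id1 id2 id3 id4 id5 id6 id7 id8 id9 id10 sh(2))

end


lemma fp4: "(f ^^ 4) x = f (f (f (f x)))" by (simp add: numeral_eq_Suc)
lemma fp3: "(f ^^ 3) x = f (f (f x))" by (simp add: numeral_eq_Suc)
lemma fp2: "(f ^^ 2) x = f (f x)" by (simp add: numeral_eq_Suc)

context
  fixes n p :: nat
  assumes n4: "n \<ge> 4" and p4: "p \<ge> 4"
begin

lemmas shh = shift_shift[OF n4 p4] shift_Q[OF n4 p4]

lemma shid': assumes "q < n * p" "a mod n = 0" "b mod p = 0" shows "shift n p a b q = q"
  using shift_id[OF n4 p4 assms] .

lemma nn1: "n - 1 + 1 = n" "p - 1 + 1 = p" "1 + (n - 1) = n" "1 + (p - 1) = p" using n4 p4 by auto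

lemma id11: "q < n * p \<Longrightarrow> N' n p (W' n p (S' n p (E' n p q))) = q"
  unfolding shh(1) by (rule shid') (use nn1 in simp_all)
lemma id12: "q < n * p \<Longrightarrow> W' n p (S' n p (E' n p (N' n p q))) = q"
  unfolding shh(1) by (rule shid') (use nn1 in simp_all)
lemma id13: "q < n * p \<Longrightarrow> S' n p (E' n p (N' n p (W' n p q))) = q"
  unfolding shh(1) by (rule shid') (use nn1 in simp_all)

lemmas ids = id1[OF n4 p4] id2[OF n4 p4] id3[OF n4 p4] id4[OF n4 p4] id5[OF n4 p4] id6[OF n4 p4]
  id7[OF n4 p4] id8[OF n4 p4] id9[OF n4 p4] id10[OF n4 p4] id11 id12 id13

lemmas sTs = sT_0T[OF n4 p4] sT_0F[OF n4 p4] sT_1T[OF n4 p4] sT_1F[OF n4 p4]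

lemma dfaT: "is_dfa {0, 1::nat} (Qt' n p) 0 {0} (dT n p)"
  using is_dfa_T[OF n4 p4] .

lemma vt_sT: "d \<in> DD (Qt' n p) \<Longrightarrow> vt n p (sg n p d) = vt n p d"
  by (erule DD_cases[OF n4 p4]) (simp_all only: sTs dart_vertex.simps if_True if_False
      dT0[OF n4 p4] dT1[OF n4 p4] ids)

lemma vt_DD: "d \<in> DD (Qt' n p) \<Longrightarrow> vt n p d \<in> Qt' n p"
  using vtx_DD[OF dfaT] .

lemma sT_orbit: "d \<in> DD (Qt' n p) \<Longrightarrow> \<exists>i<4. d = (sg n p ^^ i) (vt n p d, 0, True)"
proof (erule DD_cases[OF n4 p4])
  fix q assume q: "q < n * p" "d = (q, 0, True)"
  show "\<exists>i<4. d = (sg n p ^^ i) (vt n p d, 0, True)" using q by (intro exI[of _ 0]) simp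
next
  fix q assume q: "q < n * p" "d = (q, 1, True)"
  have "(sg n p ^^ 1) (q, 0, True) = (q, 1, True)" using sTs by simp
  then show "\<exists>i<4. d = (sg n p ^^ i) (vt n p d, 0, True)" using q by (intro exI[of _ 1]) simp
next
  fix q assume q: "q < n * p" "d = (q, 0, False)"
  have "(sg n p ^^ 2) (E' n p q, 0, True) = (q, 0, False)"
    by (simp only: fp2 sTs ids q(1))
  then show "\<exists>i<4. d = (sg n p ^^ i) (vt n p d, 0, True)" using q dT0[OF n4 p4] by (intro exI[of _ 2]) simp
next
  fix q assume q: "q < n * p" "d = (q, 1, False)"
  have "(sg n p ^^ 3) (N' n p q, 0, True) = (q, 1, False)"
    by (simp only: fp3 sTs ids q(1))
  then show "\<exists>i<4. d = (sg n p ^^ i) (vt n p d, 0, True)" using q dT1[OF n4 p4] by (intro exI[of _ 3]) simp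
qed

lemma funpow_DD: "d \<in> DD (Qt' n p) \<Longrightarrow> (sg n p ^^ k) d \<in> DD (Qt' n p)"
proof (induction k)
  case 0 then show ?case by simp
next
  case (Suc k) then show ?case using sT_DD[OF n4 p4, of "(sg n p ^^ k) d"] by simp
qed

lemma rotT: "rotation_system {0,1} (Qt' n p) (dT n p) (sg n p)"
proof -
  let ?D = "DD (Qt' n p)" and ?s = "sg n p"
  have bij: "bij_betw ?s ?D ?D"
  proof (rule bij_betw_byWitness[where f' = "?s ^^ 3"])
    show "\<forall>x\<in>?D. (?s ^^ 3) (?s x) = x"
    proof
      fix x assume x: "x \<in> ?D"
      have "(?s ^^ 3) (?s x) = (?s ^^ 4) x" by (simp add: fp3 fp4)
      then show "(?s ^^ 3) (?s x) = x" using sT4[OF n4 p4 x] by simp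
    qed
    show "\<forall>y\<in>?D. ?s ((?s ^^ 3) y) = y"
    proof
      fix x assume x: "x \<in> ?D"
      have "?s ((?s ^^ 3) x) = (?s ^^ 4) x" by (simp add: fp3 fp4)
      then show "?s ((?s ^^ 3) x) = x" using sT4[OF n4 p4 x] by simp
    qed
    show "?s ` ?D \<subseteq> ?D" using sT_DD[OF n4 p4] by blast
    show "(?s ^^ 3) ` ?D \<subseteq> ?D" using funpow_DD by blast
  qed
  have tr: "\<exists>k. (?s ^^ k) d = e" if de: "d \<in> ?D" "e \<in> ?D" "vt n p d = vt n p e" for d e
  proof -
    obtain i where i: "i < 4" "d = (?s ^^ i) (vt n p d, 0, True)" using sT_orbit[OF de(1)] by blast
    obtain j where j: "j < 4" "e = (?s ^^ j) (vt n p d, 0, True)" using sT_orbit[OF de(2)] de(3) by auto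
    let ?x = "(vt n p d, 0::nat, True)"
    have xD: "?x \<in> ?D" using vt_DD[OF de(1)] by simp
    have "(?s ^^ (j + 4 - i)) d = (?s ^^ (j + 4 - i)) ((?s ^^ i) ?x)" using i by simp
    also have "\<dots> = (?s ^^ (j + 4 - i + i)) ?x" by (simp only: funpow_add o_apply)
    also have "j + 4 - i + i = j + 4" using i(1) by simp
    then have "(?s ^^ (j + 4 - i + i)) ?x = (?s ^^ (j + 4)) ?x" by simp
    also have "\<dots> = (?s ^^ j) ((?s ^^ 4) ?x)" by (simp add: funpow_add)
    also have "\<dots> = e" using sT4[OF n4 p4 xD] j by simp
    finally show ?thesis by blast
  qed
  show ?thesis unfolding rotation_system_def using bij vt_sT tr by blast
qed

end


context
  fixes n p :: nat
  assumes n4: "n \<ge> 4" and p4: "p \<ge> 4"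
begin

lemmas sTs' = sT_0T[OF n4 p4] sT_0F[OF n4 p4] sT_1T[OF n4 p4] sT_1F[OF n4 p4]
lemmas ids' = ids[OF n4 p4]
lemmas rT = rotT[OF n4 p4]
lemmas dT' = dfaT[OF n4 p4]

lemma phi4: "d \<in> DD (Qt' n p) \<Longrightarrow> ((sg n p \<circ> dart_rev) ^^ 4) d = d"
  by (erule DD_cases[OF n4 p4]) (simp_all only: fp4 o_apply dart_rev.simps sTs' ids' simp_thms)

lemma zphi: "card (Qt' n p) \<le> zc (sg0 (Qt' n p) (sg n p) \<circ> al0 (Qt' n p)) (DD (Qt' n p))"
proof -
  let ?D = "DD (Qt' n p)" and ?f = "sg0 (Qt' n p) (sg n p) \<circ> al0 (Qt' n p)"
  have g: "good (sg0 (Qt' n p) (sg n p)) (al0 (Qt' n p)) ?D" using good_bridge[OF dT' rT] .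
  have pf: "permutation ?f" using g unfolding good_def by (simp add: permutation_compose)
  have fD: "?f ` ?D \<subseteq> ?D" using g unfolding good_def by (auto simp: image_subset_iff)
  have le4: "card (orb ?f d) \<le> 4" if d: "d \<in> ?D" for d
  proof -
    have "(?f ^^ 4) d = ((sg n p \<circ> dart_rev) ^^ 4) d" using phi_funpow[OF rT d] by blast
    then have "(?f ^^ 4) d = d" using phi4[OF d] by simp
    then have "orb ?f d = (\<lambda>i. (?f ^^ i) d) ` {..<4}" using orb_period[of 4 ?f d] by auto
    then show ?thesis using card_image_le[of "{..<4::nat}" "\<lambda>i. (?f ^^ i) d"] by simp
  qed
  have "card ?D \<le> 4 * zc ?f ?D" by (rule sum_orbits_le[OF pf _ fD le4]) (rule finite_DD, simp)
  then show ?thesis using card_DD[of "Qt' n p"] by simp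
qed

abbreviation "EE \<equiv> graph_edges {0,1} (Qt' n p) (dT n p)"
abbreviation "RT \<equiv> (EE \<union> EE\<inverse>)\<^sup>*"

lemma edgeE: "q < n * p \<Longrightarrow> q mod n + 1 < n \<Longrightarrow> (q, q + 1) \<in> EE"
proof -
  assume q: "q < n * p" and m: "q mod n + 1 < n"
  have qd: "q div n < p" using q n4 by (simp add: div_less_iff_less_mult mult.commute)
  have "dT n p q 0 = (q mod n + 1) mod n + n * ((q div n + 0) mod p)" by (simp add: dT_def shift_def)
  also have "\<dots> = q mod n + 1 + n * (q div n)" using m qd by simp
  also have "\<dots> = q + 1" by simp
  finally have "dT n p q 0 = q + 1" .
  then show ?thesis unfolding graph_edges_def using q by force
qed

lemma edgeN: "q < n * p \<Longrightarrow> q div n + 1 < p \<Longrightarrow> (q, q + n) \<in> EE"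
proof -
  assume q: "q < n * p" and m: "q div n + 1 < p"
  have "dT n p q 1 = (q mod n + 0) mod n + n * ((q div n + 1) mod p)" by (simp add: dT_def shift_def)
  also have "\<dots> = q mod n + n * (q div n) + n" using m by simp
  also have "\<dots> = q + n" by simp
  finally have "dT n p q 1 = q + n" .
  then show ?thesis unfolding graph_edges_def using q by force
qed

lemma conn: "q < n * p \<Longrightarrow> (0, q) \<in> RT"
proof -
  assume q: "q < n * p"
  have row: "(0, i) \<in> RT" if "i < n" for i
    using that
  proof (induction i)
    case 0 then show ?case by simp
  next
    case (Suc i)
    have iQ: "i < n * p" using Suc.prems p4 by (metis Suc_lessD less_le_trans mult_le_mono2 mult_1_right not_less_eq_eq numeral_le_one_iff semiring_norm(70) le_trans one_le_numeral)
    have "(i, i + 1) \<in> EE" by (rule edgeE[OF iQ]) (use Suc.prems in simp)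
    then have e: "(i, Suc i) \<in> EE \<union> EE\<inverse>" by simp
    have "(0, i) \<in> RT" using Suc by simp
    then show ?case using e by (rule rtrancl_into_rtrancl)
  qed
  have col: "(i, i + n * j) \<in> RT" if "i < n" "j < p" for i j
    using that(2)
  proof (induction j)
    case 0 then show ?case by simp
  next
    case (Suc j)
    have lt: "i + n * j < n * p" using enc_lt[OF n4 p4 that(1)] Suc.prems by simp
    have "(i + n * j) div n + 1 < p" using that(1) Suc.prems n4 by simp
    then have "(i + n * j, i + n * j + n) \<in> EE" by (rule edgeN[OF lt])
    moreover have "i + n * j + n = i + n * Suc j" by simp
    ultimately have e: "(i + n * j, i + n * Suc j) \<in> EE \<union> EE\<inverse>" by simp
    have "(i, i + n * j) \<in> RT" using Suc by simp
    then show ?case using e by (rule rtrancl_into_rtrancl)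
  qed
  have mm1: "q mod n < n" using n4 by simp
  have mm2: "q div n < p" using q n4 by (simp add: div_less_iff_less_mult mult.commute)
  note mm = mm1 mm2
  have r1: "(0, q mod n) \<in> RT" using row[OF mm(1)] .
  have r2: "(q mod n, q mod n + n * (q div n)) \<in> RT" using col[OF mm] .
  have "q mod n + n * (q div n) = q" by simp
  then have r2': "(q mod n, q) \<in> RT" using r2 by simp
  show ?thesis using rtrancl_trans[OF r1 r2'] .
qed

lemma ncomp: "num_components {0,1} (Qt' n p) (dT n p) \<le> 1"
proof -
  have "Qt' n p // RT \<subseteq> {RT `` {0}}"
  proof
    fix S assume "S \<in> Qt' n p // RT"
    then obtain q where q: "q < n * p" "S = RT `` {q}" unfolding quotient_def by auto
    have a: "(0, q) \<in> RT" using conn[OF q(1)] .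
    have b: "(q, 0) \<in> RT" using R_sym[OF dT' rT a] .
    have "RT `` {q} = RT `` {0}" using a b by (meson Image_singleton_iff rtrancl_trans subsetI subset_antisym)
    then show "S \<in> {RT `` {0}}" using q by simp
  qed
  then have "card (Qt' n p // RT) \<le> card {RT `` {0}}" by (rule card_mono[rotated]) simp
  then show ?thesis unfolding num_components_def by simp
qed

lemma dfcT_le: "dfc (sg0 (Qt' n p) (sg n p)) (al0 (Qt' n p)) (DD (Qt' n p)) \<le> 2"
proof -
  have "cc (sg0 (Qt' n p) (sg n p)) (al0 (Qt' n p)) (DD (Qt' n p)) \<le> 1"
    using cc_bridge[OF dT' rT] ncomp by simp
  then have E: "int (cc (sg0 (Qt' n p) (sg n p)) (al0 (Qt' n p)) (DD (Qt' n p))) \<le> 1" by simp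
  have A: "int (zc (sg0 (Qt' n p) (sg n p)) (DD (Qt' n p))) = int (card (Qt' n p))"
    using zc_sg0[OF dT' rT] by simp
  have B: "int (zc (al0 (Qt' n p)) (DD (Qt' n p))) = 2 * int (card (Qt' n p))"
    using zc_al0[OF dT' rT] by simp
  have C: "int (card (Qt' n p)) \<le> int (zc (sg0 (Qt' n p) (sg n p) \<circ> al0 (Qt' n p)) (DD (Qt' n p)))"
    using zphi by (simp only: of_nat_le_iff)
  have D: "int (card (DD (Qt' n p))) = 4 * int (card (Qt' n p))"
    using card_DD[of "Qt' n p"] by simp
  show ?thesis unfolding dfc_def using A B C D E by linarith
qed

end


theorem proposition7:
  fixes n p :: nat
  assumes "n \<ge> 4" and "p \<ge> 4"
  shows "lang_genus {0, 1} (L_np n p) = 1"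
proof -
  have ge: "dfa_genus {0,1} Q delta \<ge> 1"
    if d: "is_dfa {0,1::nat} Q q0 F delta" "dfa_lang {0,1::nat} q0 F delta = L_np n p" for Q q0 F delta
  proof (rule dfa_genus_ge1[OF d(1)])
    fix sigma assume r: "rotation_system {0,1} Q delta sigma"
    have "2 \<le> dfc (sg0 Q sigma) (al0 Q) (DD Q)" using lower_bound[OF assms d r] .
    then show "dfc (sg0 Q sigma) (al0 Q) (DD Q) \<noteq> 0" by simp
  qed
  have dT: "is_dfa {0, 1::nat} {..<n * p} 0 {0} (dT n p)" using is_dfa_T[OF assms] .
  have lT: "dfa_lang {0, 1::nat} 0 {0} (dT n p) = L_np n p" using lang_T[OF assms] .
  have rT: "rotation_system {0,1} {..<n * p} (dT n p) (sT n p)" using rotT[OF assms] .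
  have "dfc (sg0 {..<n * p} (sT n p)) (al0 {..<n * p}) (DD {..<n * p}) = 2"
    using lower_bound[OF assms dT lT rT] dfcT_le[OF assms] by simp
  then have le: "dfa_genus {0,1} {..<n * p} (dT n p) \<le> 1" using dfa_genus_le1[OF dT rT] by simp
  have T: "dfa_genus {0,1} {..<n * p} (dT n p) = 1" using le ge[OF dT lT] by simp
  show ?thesis unfolding lang_genus_def
  proof (rule Least_equality)
    show "\<exists>Q q0 F delta. is_dfa {0, 1} Q q0 F delta \<and> dfa_lang {0, 1} q0 F delta = L_np n p \<and> dfa_genus {0, 1} Q delta = 1"
      using dT lT T by blast
  next
    fix g assume "\<exists>Q q0 F delta. is_dfa {0, 1} Q q0 F delta \<and> dfa_lang {0, 1} q0 F delta = L_np n p \<and> dfa_genus {0, 1} Q delta = g"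
    then show "1 \<le> g" using ge by blast
  qed
qed


end
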